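(* First-order logic is closed under inverse morphisms of $\mathbb{T}$-algebras: for all alphabets $\Sigma,\Gamma$, every morphism $\varphi:\mathbb{T}\Sigma\to\mathbb{T}\Gamma$ of $\mathbb{T}$-algebras, and every $\mathrm{FO}$-definable language $K\subseteq\mathbb{T}_n\Gamma$, the language $\varphi^{-1}[K]$ is $\mathrm{FO}$-definable.
   Context: Sorts are $\omega$ (arities). For an alphabet (finite unordered $\omega$-sorted set) $\Sigma$ and $n<\omega$, $\mathbb{T}_n\Sigma$ is the set of finite or infinite trees with ordered successors labelled by elements of $\Sigma$ or variables $x_0,\dots,x_{n-1}$ (arity $0$), where a vertex with label in $\Sigma_k$ has exactly $k$ successors, variables label leaves only, each variable occurs at most once, and the root is labelled by an element of $\Sigma$. $\mathbb{T}$ is a monad with $\mathrm{sing}(a)=a(x_0,\dots,x_{k-1})$ for $a$ of arity $k$, and $\mathrm{flat}$ which, for a tree of trees, replaces each vertex $v$ by its label tree $T(v)$, connecting its $x_i$-leaf to the root of the tree replacing the $(i+1)$-st successor of $v$. A $\mathbb{T}$-algebra morphism $\varphi:\mathbb{T}\Sigma\to\mathbb{T}\Gamma$ is a sort-preserving map commuting with $\mathrm{flat}$ (equivalently determined by $\varphi\circ\mathrm{sing}:\Sigma\to\mathbb{T}\Gamma$). A tree $t\in\mathbb{T}_n\Sigma$ is identified with the structure $\langle\mathrm{dom}(t),\preceq,(S_i)_{i<\omega},(P_c)_{c\in\Sigma},(Q_i)_{i<n},R\rangle$ ($\preceq$ tree order with root least, $S_i$ $i$-th successor relation, $P_c$ vertices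 labelled $c$, $Q_i$ vertices labelled $x_i$, $R$ the root). $K\subseteq\mathbb{T}_n\Sigma$ is FO-definable if it is the set of trees in $\mathbb{T}_n\Sigma$ satisfying some first-order sentence over this signature. *)

theory Defs
  imports Main
begin

text \<open>A tree is represented by its (canonical) labelling of positions: positions are
lists of natural numbers (the i-th successor of p is p @ [i], successors indexed from 0),
and a position is labelled either by a letter (Inl c) or by a variable x_i (Inr i);
positions outside the domain are mapped to None.\<close>

type_synonym 'a rtree = "nat list \<Rightarrow> ('a + nat) option"

definition wf_tree :: "'a set \<Rightarrow> ('a \<Rightarrow> nat) \<Rightarrow> nat \<Rightarrow> 'a rtree \<Rightarrow> bool" where
  "wf_tree A ar n t \<longleftrightarrow>
     (\<exists>c\<in>A. t [] = Some (Inl c)) \<and>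
     (\<forall>p. case t p of
             None \<Rightarrow> (\<forall>i. t (p @ [i]) = None)
           | Some (Inl c) \<Rightarrow> c \<in> A \<and> (\<forall>i. t (p @ [i]) \<noteq> None \<longleftrightarrow> i < ar c)
           | Some (Inr j) \<Rightarrow> j < n \<and> (\<forall>i. t (p @ [i]) = None)) \<and>
     (\<forall>p q j. t p = Some (Inr j) \<longrightarrow> t q = Some (Inr j) \<longrightarrow> p = q)"

definition trees :: "'a set \<Rightarrow> ('a \<Rightarrow> nat) \<Rightarrow> nat \<Rightarrow> 'a rtree set" where
  "trees A ar n = {t. wf_tree A ar n t}"

text \<open>The omega-sorted set T A, used as an alphabet: letters are pairs (k, u) with u in T_k A,
of arity k.\<close>

definition talph :: "'a set \<Rightarrow> ('a \<Rightarrow> nat) \<Rightarrow> (nat \<times> 'a rtree) set" where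
  "talph A ar = {(k, u). wf_tree A ar k u}"

text \<open>For a tree of trees s, resolve s v q locates the vertex of flat s corresponding to
position q of the label tree T(v) at outer vertex v.  If q carries a letter, the result is
that vertex (with its letter); if q carries variable x_i, it is identified with the root of
the tree replacing the (i+1)-st successor v @ [i] of v, or with the variable x_j if that
successor is an x_j-leaf of the outer tree.\<close>

definition resolve :: "(nat \<times> 'a rtree) rtree \<Rightarrow> nat list \<Rightarrow> nat list
                         \<Rightarrow> ((nat list \<times> nat list) + nat) option" where
  "resolve s v q =
     (case s v of
        Some (Inl (k, u)) \<Rightarrow>
          (case u q of
             Some (Inl c) \<Rightarrow> Some (Inl (v, q))
           | Some (Inr i) \<Rightarrow>
               (case s (v @ [i]) of
                  Some (Inl _) \<Rightarrow> Some (Inl (v @ [i], []))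
                | Some (Inr j) \<Rightarrow> Some (Inr j)
                | None \<Rightarrow> None)
           | None \<Rightarrow> None)
      | _ \<Rightarrow> None)"

definition flat_step :: "(nat \<times> 'a rtree) rtree \<Rightarrow> ((nat list \<times> nat list) + nat) option
                          \<Rightarrow> nat \<Rightarrow> ((nat list \<times> nat list) + nat) option" where
  "flat_step s st i = (case st of Some (Inl (v, q)) \<Rightarrow> resolve s v (q @ [i]) | _ \<Rightarrow> None)"

definition flat_pos :: "(nat \<times> 'a rtree) rtree \<Rightarrow> nat list \<Rightarrow> ((nat list \<times> nat list) + nat) option" where
  "flat_pos s p = foldl (flat_step s) (resolve s [] []) p"

definition flat :: "(nat \<times> 'a rtree) rtree \<Rightarrow> 'a rtree" where
  "flat s p =
     (case flat_pos s p of
        Some (Inl (v, q)) \<Rightarrow> (case s v of Some (Inl (k, u)) \<Rightarrow> u q | _ \<Rightarrow> None)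
      | Some (Inr j) \<Rightarrow> Some (Inr j)
      | None \<Rightarrow> None)"

text \<open>The functor T applied to a sorted map phi (phi k acts on sort k): relabelling.\<close>

definition tmap :: "(nat \<Rightarrow> 'a rtree \<Rightarrow> 'b rtree) \<Rightarrow> (nat \<times> 'a rtree) rtree \<Rightarrow> (nat \<times> 'b rtree) rtree" where
  "tmap phi s = (\<lambda>p. map_option (map_sum (\<lambda>(k, u). (k, phi k u)) id) (s p))"

definition talg_morphism :: "'a set \<Rightarrow> ('a \<Rightarrow> nat) \<Rightarrow> 'b set \<Rightarrow> ('b \<Rightarrow> nat)
                              \<Rightarrow> (nat \<Rightarrow> 'a rtree \<Rightarrow> 'b rtree) \<Rightarrow> bool" where
  "talg_morphism A arA B arB phi \<longleftrightarrow>
     (\<forall>n t. wf_tree A arA n t \<longrightarrow> wf_tree B arB n (phi n t)) \<and>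
     (\<forall>n s. wf_tree (talph A arA) fst n s \<longrightarrow> phi n (flat s) = flat (tmap phi s))"

datatype 'a fo =
    FLe nat nat
  | FSucc nat nat nat
  | FLab 'a nat
  | FVar nat nat
  | FRoot nat
  | FEq nat nat
  | FNeg "'a fo"
  | FConj "'a fo" "'a fo"
  | FEx nat "'a fo"

fun fv :: "'a fo \<Rightarrow> nat set" where
  "fv (FLe x y) = {x, y}"
| "fv (FSucc i x y) = {x, y}"
| "fv (FLab c x) = {x}"
| "fv (FVar i x) = {x}"
| "fv (FRoot x) = {x}"
| "fv (FEq x y) = {x, y}"
| "fv (FNeg f) = fv f"
| "fv (FConj f g) = fv f \<union> fv g"
| "fv (FEx x f) = fv f - {x}"

fun fo_sig :: "'a set \<Rightarrow> nat \<Rightarrow> 'a fo \<Rightarrow> bool" where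
  "fo_sig A n (FLab c x) = (c \<in> A)"
| "fo_sig A n (FVar i x) = (i < n)"
| "fo_sig A n (FNeg f) = fo_sig A n f"
| "fo_sig A n (FConj f g) = (fo_sig A n f \<and> fo_sig A n g)"
| "fo_sig A n (FEx x f) = fo_sig A n f"
| "fo_sig A n _ = True"

fun holds :: "'a rtree \<Rightarrow> 'a fo \<Rightarrow> (nat \<Rightarrow> nat list) \<Rightarrow> bool" where
  "holds t (FLe x y) e = (\<exists>r. e y = e x @ r)"
| "holds t (FSucc i x y) e = (e y = e x @ [i])"
| "holds t (FLab c x) e = (t (e x) = Some (Inl c))"
| "holds t (FVar i x) e = (t (e x) = Some (Inr i))"
| "holds t (FRoot x) e = (e x = [])"
| "holds t (FEq x y) e = (e x = e y)"
| "holds t (FNeg f) e = (\<not> holds t f e)"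
| "holds t (FConj f g) e = (holds t f e \<and> holds t g e)"
| "holds t (FEx x f) e = (\<exists>p. t p \<noteq> None \<and> holds t f (e(x := p)))"

definition models :: "'a rtree \<Rightarrow> 'a fo \<Rightarrow> bool" where
  "models t f = holds t f (\<lambda>_. [])"

definition fo_definable :: "'a set \<Rightarrow> ('a \<Rightarrow> nat) \<Rightarrow> nat \<Rightarrow> 'a rtree set \<Rightarrow> bool" where
  "fo_definable A ar n K \<longleftrightarrow>
     (\<exists>f. fv f = {} \<and> fo_sig A n f \<and> K = {t \<in> trees A ar n. models t f})"

end

theory Submission
  imports Defs "HOL-Library.Sublist" "HOL-Library.Nat_Bijection"
begin

section \<open>Basic facts on well-formed trees\<close>

lemma wf_root: "wf_tree A ar k t \<Longrightarrow> \<exists>c\<in>A. t [] = Some (Inl c)"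
  unfolding wf_tree_def by blast

lemma wf_None: "wf_tree A ar k t \<Longrightarrow> t p = None \<Longrightarrow> t (p @ [i]) = None"
  unfolding wf_tree_def by (drule conjunct2, drule conjunct1, erule allE[of _ p]) simp

lemma wf_Inl: "wf_tree A ar k t \<Longrightarrow> t p = Some (Inl c) \<Longrightarrow> c \<in> A \<and> (t (p @ [i]) \<noteq> None \<longleftrightarrow> i < ar c)"
  unfolding wf_tree_def by (drule conjunct2, drule conjunct1, erule allE[of _ p]) simp

lemma wf_Inr: "wf_tree A ar k t \<Longrightarrow> t p = Some (Inr j) \<Longrightarrow> j < k \<and> t (p @ [i]) = None"
  unfolding wf_tree_def by (drule conjunct2, drule conjunct1, erule allE[of _ p]) simp

lemma wf_uniq: "wf_tree A ar k t \<Longrightarrow> t p = Some (Inr j) \<Longrightarrow> t q = Some (Inr j) \<Longrightarrow> p = q"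
  unfolding wf_tree_def by blast

lemma wf_child: "wf_tree A ar k t \<Longrightarrow> t (p @ [i]) \<noteq> None \<Longrightarrow> \<exists>c. t p = Some (Inl c) \<and> i < ar c"
proof (cases "t p")
  case None
  assume "wf_tree A ar k t" "t (p @ [i]) \<noteq> None"
  then show ?thesis using None wf_None by metis
next
  case (Some x)
  assume w: "wf_tree A ar k t" and ch: "t (p @ [i]) \<noteq> None"
  show ?thesis
  proof (cases x)
    case (Inl c) then show ?thesis using Some w ch wf_Inl by metis
  next
    case (Inr j) then show ?thesis using Some w ch wf_Inr by metis
  qed
qed

lemma wf_prefix: "wf_tree A ar k t \<Longrightarrow> t (p @ q) \<noteq> None \<Longrightarrow> t p \<noteq> None"
proof (induction q rule: rev_induct)
  case Nil then show ?case by simp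
next
  case (snoc x xs)
  then show ?case using wf_child[of A ar k t "p @ xs" x] by auto
qed

lemma wf_prefix': "wf_tree A ar k t \<Longrightarrow> t q \<noteq> None \<Longrightarrow> prefix p q \<Longrightarrow> t p \<noteq> None"
  unfolding prefix_def using wf_prefix by blast

lemma wf_Inr_below: "wf_tree A ar k t \<Longrightarrow> t p = Some (Inr j) \<Longrightarrow> q \<noteq> [] \<Longrightarrow> t (p @ q) = None"
proof (induction q rule: rev_induct)
  case Nil then show ?case by simp
next
  case (snoc x xs)
  show ?case
  proof (cases "xs = []")
    case True then show ?thesis using snoc wf_Inr by fastforce
  next
    case False then show ?thesis using snoc wf_None[of A ar k t "p @ xs"] by auto
  qed
qed

lemma flat_pos_append: "flat_pos s (p @ q) = foldl (flat_step s) (flat_pos s p) q"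
  unfolding flat_pos_def by simp

lemma flat_pos_snoc: "flat_pos s (p @ [i]) = flat_step s (flat_pos s p) i"
  unfolding flat_pos_def by simp

lemma foldl_flat_step_None: "foldl (flat_step s) None q = None"
  by (induction q) (auto simp: flat_step_def)

lemma foldl_flat_step_Inr: "q \<noteq> [] \<Longrightarrow> foldl (flat_step s) (Some (Inr j)) q = None"
  by (cases q) (auto simp: flat_step_def foldl_flat_step_None)

definition hashole :: "'b rtree \<Rightarrow> nat \<Rightarrow> bool" where
  "hashole u c \<longleftrightarrow> (\<exists>q. u q = Some (Inr c))"

definition holepos :: "'b rtree \<Rightarrow> nat \<Rightarrow> nat list" where
  "holepos u c = (THE q. u q = Some (Inr c))"

lemma holepos: "wf_tree A ar k u \<Longrightarrow> hashole u c \<Longrightarrow> u (holepos u c) = Some (Inr c)"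
  unfolding holepos_def hashole_def by (rule theI') (auto dest: wf_uniq)

lemma holepos_eq: "wf_tree A ar k u \<Longrightarrow> u q = Some (Inr c) \<Longrightarrow> holepos u c = q"
  unfolding holepos_def by (rule the_equality) (auto dest: wf_uniq)

lemma holepos_ne: "wf_tree A ar k u \<Longrightarrow> hashole u c \<Longrightarrow> holepos u c \<noteq> []"
  using holepos wf_root by fastforce

lemma hashole_lt: "wf_tree A ar k u \<Longrightarrow> hashole u c \<Longrightarrow> c < k"
  unfolding hashole_def using wf_Inr by blast

section \<open>Analysis of flat on block trees\<close>

locale blk =
  fixes Sig :: "'a set" and ar :: "'a \<Rightarrow> nat" and n :: nat
    and G :: "'b set" and arG :: "'b \<Rightarrow> nat" and g :: "'a \<Rightarrow> 'b rtree"
  assumes g_wf: "a \<in> Sig \<Longrightarrow> wf_tree G arG (ar a) (g a)"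
begin

definition blockify :: "'a rtree \<Rightarrow> (nat \<times> 'b rtree) rtree" where
  "blockify t p = (case t p of Some (Inl a) \<Rightarrow> Some (Inl (ar a, g a)) | Some (Inr j) \<Rightarrow> Some (Inr j)
                    | None \<Rightarrow> None)"

definition hstep :: "'a rtree \<Rightarrow> nat list \<Rightarrow> nat \<Rightarrow> nat list" where
  "hstep t v c = (case t v of Some (Inl a) \<Rightarrow> holepos (g a) c | _ \<Rightarrow> [])"

definition bp :: "'a rtree \<Rightarrow> nat list \<Rightarrow> nat list" where
  "bp t v = concat (map (\<lambda>i. hstep t (take i v) (v ! i)) [0..<length v])"

lemma bp_Nil[simp]: "bp t [] = []"
  by (simp add: bp_def)

lemma bp_snoc: "bp t (v @ [c]) = bp t v @ hstep t v c"
proof -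
  define f where "f = (\<lambda>i. hstep t (take i (v @ [c])) ((v @ [c]) ! i))"
  have 1: "bp t (v @ [c]) = concat (map f [0..<length v]) @ f (length v)"
    unfolding bp_def f_def by simp
  have 2: "map f [0..<length v] = map (\<lambda>i. hstep t (take i v) (v ! i)) [0..<length v]"
    unfolding f_def by (rule map_cong) (auto simp: nth_append)
  have 3: "f (length v) = hstep t v c" unfolding f_def by simp
  show ?thesis unfolding 1 2 3 by (simp only: bp_def)
qed

lemma bp_mono: "prefix v w \<Longrightarrow> prefix (bp t v) (bp t w)"
proof -
  assume "prefix v w"
  then obtain r where "w = v @ r" by (auto simp: prefix_def)
  moreover have "prefix (bp t v) (bp t (v @ r))"
    by (induction r rule: rev_induct) (auto simp: bp_snoc append_assoc[symmetric] simp del: append_assoc)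
  ultimately show ?thesis by simp
qed

definition RB :: "'a rtree \<Rightarrow> nat list \<Rightarrow> bool" where
  "RB t v \<longleftrightarrow> t v \<noteq> None \<and> (\<forall>i<length v. \<exists>a. t (take i v) = Some (Inl a) \<and> hashole (g a) (v ! i))"

definition lp :: "'a \<Rightarrow> nat list \<Rightarrow> bool" where
  "lp a q \<longleftrightarrow> (\<exists>c. g a q = Some (Inl c))"

definition Dm :: "'a + nat \<Rightarrow> nat list set" where
  "Dm K = (case K of Inl a \<Rightarrow> {q. lp a q} | Inr j \<Rightarrow> {[]})"

definition valid :: "'a rtree \<Rightarrow> nat list \<Rightarrow> nat list \<Rightarrow> bool" where
  "valid t v q \<longleftrightarrow> RB t v \<and> (\<exists>K. t v = Some K \<and> q \<in> Dm K)"

definition lab_of :: "'a + nat \<Rightarrow> nat list \<Rightarrow> ('b + nat) option" where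
  "lab_of K q = (case K of Inl a \<Rightarrow> g a q | Inr j \<Rightarrow> Some (Inr j))"

definition enc :: "'a rtree \<Rightarrow> nat list \<Rightarrow> nat list \<Rightarrow> nat list" where
  "enc t v q = bp t v @ q"

definition lab :: "'a rtree \<Rightarrow> nat list \<Rightarrow> nat list \<Rightarrow> ('b + nat) option" where
  "lab t v q = (case t v of Some (Inl a) \<Rightarrow> g a q | Some (Inr j) \<Rightarrow> Some (Inr j) | None \<Rightarrow> None)"


lemma RB_Nil: "RB t [] \<longleftrightarrow> t [] \<noteq> None"
  by (simp add: RB_def)

lemma hstep_Inl: "t v = Some (Inl a) \<Longrightarrow> hstep t v c = holepos (g a) c"
  by (simp add: hstep_def)

lemma lp_root: "a \<in> Sig \<Longrightarrow> lp a []"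
  using wf_root[OF g_wf] unfolding lp_def by blast

context
  fixes t :: "'a rtree"
  assumes wt: "wf_tree Sig ar n t"
begin

lemma RB_snoc: "RB t (v @ [c]) \<longleftrightarrow> RB t v \<and> (\<exists>a. t v = Some (Inl a) \<and> hashole (g a) c) \<and> t (v @ [c]) \<noteq> None"
proof
  assume r: "RB t (v @ [c])"
  then have ne: "t (v @ [c]) \<noteq> None" by (simp add: RB_def)
  have "t v \<noteq> None" using wf_prefix[OF wt ne] .
  moreover have "\<forall>i<length v. \<exists>a. t (take i v) = Some (Inl a) \<and> hashole (g a) (v ! i)"
  proof (intro allI impI)
    fix i assume "i < length v"
    with r show "\<exists>a. t (take i v) = Some (Inl a) \<and> hashole (g a) (v ! i)"
      unfolding RB_def by (auto simp: nth_append elim!: allE[of _ i])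
  qed
  moreover have "\<exists>a. t v = Some (Inl a) \<and> hashole (g a) c"
    using r unfolding RB_def by (auto elim!: allE[of _ "length v"])
  ultimately show "RB t v \<and> (\<exists>a. t v = Some (Inl a) \<and> hashole (g a) c) \<and> t (v @ [c]) \<noteq> None"
    using ne by (simp add: RB_def)
next
  assume r: "RB t v \<and> (\<exists>a. t v = Some (Inl a) \<and> hashole (g a) c) \<and> t (v @ [c]) \<noteq> None"
  show "RB t (v @ [c])"
    unfolding RB_def
  proof (intro conjI allI impI)
    show "t (v @ [c]) \<noteq> None" using r by simp
    fix i assume "i < length (v @ [c])"
    then have "i < length v \<or> i = length v" by auto
    then show "\<exists>a. t (take i (v @ [c])) = Some (Inl a) \<and> hashole (g a) ((v @ [c]) ! i)"
      using r unfolding RB_def by (auto simp: nth_append)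
  qed
qed

lemma RB_dom: "RB t v \<Longrightarrow> t v \<noteq> None"
  by (simp add: RB_def)

lemma RB_prefix: "RB t w \<Longrightarrow> prefix v w \<Longrightarrow> RB t v"
proof -
  assume "RB t w" "prefix v w"
  then obtain r where "w = v @ r" "RB t (v @ r)" by (auto simp: prefix_def)
  then show "RB t v"
  proof (induction r arbitrary: w rule: rev_induct)
    case Nil then show ?case by simp
  next
    case (snoc x xs) then show ?case using RB_snoc[of "v @ xs" x] by simp
  qed
qed

lemma t_Sig: "t v = Some (Inl a) \<Longrightarrow> a \<in> Sig"
  using wf_Inl[OF wt] by blast

lemma resolve_letter: "t v = Some (Inl a) \<Longrightarrow> lp a q \<Longrightarrow> resolve (blockify t) v q = Some (Inl (v, q))"
  unfolding lp_def by (auto simp: resolve_def blockify_def)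

lemma inner:
  assumes tv: "t v = Some (Inl a)" and P: "flat_pos (blockify t) P = Some (Inl (v, []))"
  shows "g a q \<noteq> None \<Longrightarrow> flat_pos (blockify t) (P @ q) = resolve (blockify t) v q"
proof (induction q rule: rev_induct)
  case Nil
  have "a \<in> Sig" using t_Sig tv .
  then show ?case using P resolve_letter[OF tv lp_root] by simp
next
  case (snoc i q)
  have aS: "a \<in> Sig" using t_Sig tv .
  from wf_child[OF g_wf[OF aS] snoc.prems] obtain c where c: "g a q = Some (Inl c)" by blast
  then have "flat_pos (blockify t) (P @ q) = Some (Inl (v, q))"
    using snoc.IH resolve_letter[OF tv] unfolding lp_def by auto
  then show ?case by (simp add: flat_pos_snoc[of _ "P @ q", simplified] flat_step_def)
qed

lemma enc_block: "RB t v \<Longrightarrow> flat_pos (blockify t) (bp t v) =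
   (case t v of Some (Inl a) \<Rightarrow> Some (Inl (v, [])) | Some (Inr j) \<Rightarrow> Some (Inr j) | None \<Rightarrow> None)"
proof (induction v rule: rev_induct)
  case Nil
  obtain a where a: "a \<in> Sig" "t [] = Some (Inl a)" using wf_root[OF wt] by blast
  then show ?case using resolve_letter[OF a(2) lp_root[OF a(1)]] by (simp add: flat_pos_def)
next
  case (snoc c v)
  from snoc.prems obtain a where rv: "RB t v" and tv: "t v = Some (Inl a)" and h: "hashole (g a) c"
    and ne: "t (v @ [c]) \<noteq> None" using RB_snoc by blast
  have aS: "a \<in> Sig" using t_Sig tv .
  have IH: "flat_pos (blockify t) (bp t v) = Some (Inl (v, []))" using snoc.IH rv tv by simp
  have hp: "g a (holepos (g a) c) = Some (Inr c)" using holepos[OF g_wf[OF aS] h] .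
  have "flat_pos (blockify t) (bp t (v @ [c])) = resolve (blockify t) v (holepos (g a) c)"
    using inner[OF tv IH, of "holepos (g a) c"] hp by (simp add: bp_snoc hstep_Inl[of t v a, OF tv])
  also have "\<dots> = (case t (v @ [c]) of Some (Inl a) \<Rightarrow> Some (Inl (v @ [c], [])) | Some (Inr j) \<Rightarrow> Some (Inr j) | None \<Rightarrow> None)"
    using tv hp ne by (auto simp: resolve_def blockify_def split: option.split sum.split)
  finally show ?case .
qed

lemma enc_Inl: "RB t v \<Longrightarrow> t v = Some (Inl a) \<Longrightarrow> lp a q \<Longrightarrow> flat_pos (blockify t) (enc t v q) = Some (Inl (v, q))"
proof -
  assume rv: "RB t v" and tv: "t v = Some (Inl a)" and l: "lp a q"
  have IH: "flat_pos (blockify t) (bp t v) = Some (Inl (v, []))" using enc_block[OF rv] tv by simp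
  have "g a q \<noteq> None" using l by (auto simp: lp_def)
  then show ?thesis using inner[OF tv IH] resolve_letter[OF tv l] by (simp add: enc_def)
qed

lemma enc_Inr: "RB t v \<Longrightarrow> t v = Some (Inr j) \<Longrightarrow> flat_pos (blockify t) (enc t v []) = Some (Inr j)"
  using enc_block by (simp add: enc_def)

lemma decode: "flat_pos (blockify t) p = Some X \<Longrightarrow> (case X of Inl (v, q) \<Rightarrow> RB t v \<and> (\<exists>a. t v = Some (Inl a) \<and> lp a q) \<and> p = enc t v q
     | Inr j \<Rightarrow> \<exists>v. RB t v \<and> t v = Some (Inr j) \<and> p = enc t v [])"
proof (induction p arbitrary: X rule: rev_induct)
  case Nil
  obtain a where a: "a \<in> Sig" "t [] = Some (Inl a)" using wf_root[OF wt] by blast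
  then have "X = Inl ([], [])" using Nil resolve_letter[OF a(2) lp_root[OF a(1)]] by (simp add: flat_pos_def)
  then show ?case using a lp_root[OF a(1)] by (simp add: RB_def enc_def)
next
  case (snoc i p)
  have "flat_pos (blockify t) p \<noteq> None"
    using snoc.prems by (auto simp: flat_pos_snoc flat_step_def split: option.splits)
  then obtain Y where Y: "flat_pos (blockify t) p = Some Y" by blast
  then obtain v q where vq: "Y = Inl (v, q)"
    using snoc.prems by (cases Y) (auto simp: flat_pos_snoc flat_step_def)
  from snoc.IH[OF Y] vq obtain a where rv: "RB t v" and tv: "t v = Some (Inl a)" and l: "lp a q"
    and pe: "p = enc t v q" by auto
  have aS: "a \<in> Sig" using t_Sig tv .
  have res: "resolve (blockify t) v (q @ [i]) = Some X"
    using snoc.prems Y vq by (simp add: flat_pos_snoc flat_step_def)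
  show ?case
  proof (cases "g a (q @ [i])")
    case None then show ?thesis using res tv by (simp add: resolve_def blockify_def)
  next
    case (Some y)
    show ?thesis
    proof (cases y)
      case (Inl c)
      then have "X = Inl (v, q @ [i])" using res tv Some by (simp add: resolve_def blockify_def)
      then show ?thesis using rv tv Some Inl pe by (auto simp: lp_def enc_def)
    next
      case (Inr c)
      have hh: "hashole (g a) c" using Some Inr by (auto simp: hashole_def)
      have hp: "holepos (g a) c = q @ [i]" using holepos_eq[OF g_wf[OF aS]] Some Inr by simp
      have bps: "bp t (v @ [c]) = p @ [i]" using pe by (simp add: bp_snoc hstep_Inl[of t v a, OF tv] hp enc_def)
      show ?thesis
      proof (cases "t (v @ [c])")
        case None then show ?thesis using res tv Some Inr by (simp add: resolve_def blockify_def)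
      next
        case (Some z)
        have rvc: "RB t (v @ [c])" using RB_snoc rv tv hh Some by auto
        show ?thesis
        proof (cases z)
          case (Inl a')
          have "X = Inl (v @ [c], [])" using res tv \<open>g a (q @ [i]) = Some y\<close> Inr Some Inl
            by (simp add: resolve_def blockify_def)
          then show ?thesis using rvc Some Inl bps lp_root[OF t_Sig] by (auto simp: enc_def)
        next
          case (Inr j)
          have "X = Inr j" using res tv \<open>g a (q @ [i]) = Some y\<close> \<open>y = Inr c\<close> Some Inr
            by (simp add: resolve_def blockify_def)
          then show ?thesis using rvc Some Inr bps by (auto simp: enc_def)
        qed
      qed
    qed
  qed
qed


lemma valid_cases:
  assumes "valid t v q"
  obtains a where "RB t v" "t v = Some (Inl a)" "lp a q"
    | j where "RB t v" "t v = Some (Inr j)" "q = []"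
proof -
  obtain K where K: "RB t v" "t v = Some K" "q \<in> Dm K" using assms by (auto simp: valid_def)
  show ?thesis
  proof (cases K)
    case (Inl a) then show ?thesis using K that(1)[of a] by (simp add: Dm_def)
  next
    case (Inr j) then show ?thesis using K that(2)[of j] by (simp add: Dm_def)
  qed
qed

lemma fp_valid: "valid t v q \<Longrightarrow> flat_pos (blockify t) (enc t v q) =
   (case t v of Some (Inl a) \<Rightarrow> Some (Inl (v, q)) | Some (Inr j) \<Rightarrow> Some (Inr j) | None \<Rightarrow> None)"
proof -
  assume vv: "valid t v q"
  then obtain K where K: "RB t v" "t v = Some K" "q \<in> Dm K" by (auto simp: valid_def)
  show ?thesis
  proof (cases K)
    case (Inl a) then show ?thesis using K enc_Inl[of v a q] by (simp add: Dm_def)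
  next
    case (Inr j) then show ?thesis using K enc_Inr[of v j] by (simp add: Dm_def)
  qed
qed

lemma flat_enc: "valid t v q \<Longrightarrow> flat (blockify t) (enc t v q) = lab t v q"
  by (erule valid_cases) (use fp_valid[of v q] in \<open>auto simp: flat_def lab_def blockify_def valid_def Dm_def\<close>)

lemma lab_ne: "valid t v q \<Longrightarrow> lab t v q \<noteq> None"
  by (erule valid_cases) (auto simp: lab_def lp_def)

lemma flat_dom: "flat (blockify t) p \<noteq> None \<longleftrightarrow> (\<exists>v q. valid t v q \<and> p = enc t v q)"
proof
  assume "flat (blockify t) p \<noteq> None"
  then obtain X where X: "flat_pos (blockify t) p = Some X" by (auto simp: flat_def split: option.splits)
  show "\<exists>v q. valid t v q \<and> p = enc t v q"
  proof (cases X)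
    case (Inl vq)
    obtain v q where vq: "vq = (v, q)" by (cases vq)
    then have "RB t v \<and> (\<exists>a. t v = Some (Inl a) \<and> lp a q) \<and> p = enc t v q"
      using decode[OF X] Inl by simp
    then have "valid t v q \<and> p = enc t v q" unfolding valid_def Dm_def by auto
    then show ?thesis by blast
  next
    case (Inr j)
    then show ?thesis using decode[OF X] unfolding valid_def Dm_def by auto
  qed
next
  assume "\<exists>v q. valid t v q \<and> p = enc t v q"
  then show "flat (blockify t) p \<noteq> None" using flat_enc lab_ne by auto
qed

lemma enc_inj: "valid t v1 q1 \<Longrightarrow> valid t v2 q2 \<Longrightarrow> enc t v1 q1 = enc t v2 q2 \<Longrightarrow> v1 = v2 \<and> q1 = q2"
proof -
  assume v1: "valid t v1 q1" and v2: "valid t v2 q2" and e: "enc t v1 q1 = enc t v2 q2"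
  have eq: "flat_pos (blockify t) (enc t v1 q1) = flat_pos (blockify t) (enc t v2 q2)" using e by simp
  obtain K1 where K1: "t v1 = Some K1" "q1 \<in> Dm K1" using v1 by (auto simp: valid_def)
  obtain K2 where K2: "t v2 = Some K2" "q2 \<in> Dm K2" using v2 by (auto simp: valid_def)
  show ?thesis
  proof (cases K1; cases K2)
    fix j1 j2 assume "K1 = Inr j1" "K2 = Inr j2"
    then show ?thesis using eq fp_valid[OF v1] fp_valid[OF v2] K1 K2 wf_uniq[OF wt, of v1 j1 v2]
      by (auto simp: Dm_def)
  qed (use eq fp_valid[OF v1] fp_valid[OF v2] K1 K2 in auto)
qed

definition XC :: "nat list \<Rightarrow> nat list \<Rightarrow> nat list \<Rightarrow> bool" where
  "XC v1 q1 v \<longleftrightarrow> (\<exists>a c. t v1 = Some (Inl a) \<and> hashole (g a) c \<and> prefix q1 (holepos (g a) c) \<and> prefix (v1 @ [c]) v)"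

lemma XC_snoc: "XC v1 q1 v \<Longrightarrow> XC v1 q1 (v @ [c])"
  unfolding XC_def by (metis prefix_prefix)

lemma pre_walk:
  assumes v1: "valid t v1 q1"
  shows "flat_pos (blockify t) (enc t v1 q1 @ r) = Some X \<Longrightarrow>
    (case X of Inl (v, q) \<Rightarrow> (v = v1 \<and> prefix q1 q) \<or> XC v1 q1 v
      | Inr j \<Rightarrow> \<exists>v. t v = Some (Inr j) \<and> ((v = v1 \<and> q1 = []) \<or> XC v1 q1 v))"
proof (induction r arbitrary: X rule: rev_induct)
  case Nil
  from v1 show ?case
  proof (cases rule: valid_cases)
    case (1 a) then show ?thesis using Nil fp_valid[OF v1] by auto
  next
    case (2 j) then show ?thesis using Nil fp_valid[OF v1] by auto
  qed
next
  case (snoc i r)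
  let ?P = "enc t v1 q1 @ r"
  have "flat_pos (blockify t) ?P \<noteq> None"
    using snoc.prems by (auto simp: flat_pos_snoc[of _ ?P, simplified] flat_step_def split: option.splits)
  then obtain Y where Y: "flat_pos (blockify t) ?P = Some Y" by blast
  then obtain v q where vq: "Y = Inl (v, q)"
    using snoc.prems by (cases Y) (auto simp: flat_pos_snoc[of _ ?P, simplified] flat_step_def)
  from decode[OF Y] vq obtain a where rv: "RB t v" and tv: "t v = Some (Inl a)" and l: "lp a q" by auto
  have IH: "(v = v1 \<and> prefix q1 q) \<or> XC v1 q1 v" using snoc.IH[OF Y] vq by simp
  have aS: "a \<in> Sig" using t_Sig tv .
  have res: "resolve (blockify t) v (q @ [i]) = Some X"
    using snoc.prems Y vq by (simp add: flat_pos_snoc[of _ ?P, simplified] flat_step_def)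
  show ?case
  proof (cases "g a (q @ [i])")
    case None then show ?thesis using res tv by (simp add: resolve_def blockify_def)
  next
    case (Some y)
    show ?thesis
    proof (cases y)
      case (Inl c)
      then have "X = Inl (v, q @ [i])" using res tv Some by (simp add: resolve_def blockify_def)
      then show ?thesis using IH by auto
    next
      case (Inr c)
      have hh: "hashole (g a) c" using Some Inr by (auto simp: hashole_def)
      have hp: "holepos (g a) c = q @ [i]" using holepos_eq[OF g_wf[OF aS]] Some Inr by simp
      have XCc: "XC v1 q1 (v @ [c])"
        using IH
      proof
        assume "v = v1 \<and> prefix q1 q"
        then show ?thesis unfolding XC_def using tv hh hp by auto
      next
        assume "XC v1 q1 v" then show ?thesis by (rule XC_snoc)
      qed
      show ?thesis
      proof (cases "t (v @ [c])")
        case None then show ?thesis using res tv Some Inr by (simp add: resolve_def blockify_def)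
      next
        case (Some z)
        show ?thesis
        proof (cases z)
          case (Inl a')
          have "X = Inl (v @ [c], [])" using res tv \<open>g a (q @ [i]) = Some y\<close> \<open>y = Inr c\<close> Some Inl
            by (simp add: resolve_def blockify_def)
          then show ?thesis using XCc by simp
        next
          case (Inr j)
          have "X = Inr j" using res tv \<open>g a (q @ [i]) = Some y\<close> \<open>y = Inr c\<close> Some Inr
            by (simp add: resolve_def blockify_def)
          then show ?thesis using XCc Some Inr by auto
        qed
      qed
    qed
  qed
qed

lemma enc_prefix:
  assumes v1: "valid t v1 q1" and v2: "valid t v2 q2"
  shows "prefix (enc t v1 q1) (enc t v2 q2) \<longleftrightarrow> (v1 = v2 \<and> prefix q1 q2) \<or> XC v1 q1 v2"
proof
  assume "prefix (enc t v1 q1) (enc t v2 q2)"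
  then obtain r where r: "enc t v2 q2 = enc t v1 q1 @ r" by (auto simp: prefix_def)
  obtain K2 where K2: "t v2 = Some K2" "q2 \<in> Dm K2" using v2 by (auto simp: valid_def)
  show "(v1 = v2 \<and> prefix q1 q2) \<or> XC v1 q1 v2"
  proof (cases K2)
    case (Inl a2)
    then have "flat_pos (blockify t) (enc t v1 q1 @ r) = Some (Inl (v2, q2))"
      using fp_valid[OF v2] K2 r by simp
    then show ?thesis using pre_walk[OF v1] by fastforce
  next
    case (Inr j2)
    then have "flat_pos (blockify t) (enc t v1 q1 @ r) = Some (Inr j2)"
      using fp_valid[OF v2] K2 r by simp
    then obtain v where "t v = Some (Inr j2)" "(v = v1 \<and> q1 = []) \<or> XC v1 q1 v"
      using pre_walk[OF v1] by fastforce
    moreover have "v = v2" using wf_uniq[OF wt] K2 Inr calculation(1) by metis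
    moreover have "q2 = []" using K2 Inr by (simp add: Dm_def)
    ultimately show ?thesis by auto
  qed
next
  assume "(v1 = v2 \<and> prefix q1 q2) \<or> XC v1 q1 v2"
  then show "prefix (enc t v1 q1) (enc t v2 q2)"
  proof
    assume "v1 = v2 \<and> prefix q1 q2" then show ?thesis by (simp add: enc_def)
  next
    assume "XC v1 q1 v2"
    then obtain a c where tv: "t v1 = Some (Inl a)" and "hashole (g a) c" and pq: "prefix q1 (holepos (g a) c)"
      and pv: "prefix (v1 @ [c]) v2" unfolding XC_def by blast
    have "prefix (bp t (v1 @ [c])) (bp t v2)" using bp_mono[OF pv] .
    then have "prefix (bp t v1 @ holepos (g a) c) (bp t v2)" by (simp add: bp_snoc hstep_Inl[of t v1 a, OF tv])
    then have "prefix (bp t v1 @ q1) (bp t v2)" using pq by (metis prefix_order.trans same_prefix_prefix)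
    then show ?thesis unfolding enc_def by (metis prefix_prefix)
  qed
qed

lemma enc_succ:
  assumes v1: "valid t v1 q1" and v2: "valid t v2 q2"
  shows "enc t v2 q2 = enc t v1 q1 @ [k] \<longleftrightarrow> (v2 = v1 \<and> q2 = q1 @ [k]) \<or>
     (\<exists>a c. t v1 = Some (Inl a) \<and> g a (q1 @ [k]) = Some (Inr c) \<and> v2 = v1 @ [c] \<and> q2 = [])"
proof
  assume e: "enc t v2 q2 = enc t v1 q1 @ [k]"
  have ne: "flat_pos (blockify t) (enc t v2 q2) \<noteq> None"
    using fp_valid[OF v2] v2 by (auto simp: valid_def RB_def split: sum.splits)
  obtain K1 where K1: "t v1 = Some K1" "q1 \<in> Dm K1" using v1 by (auto simp: valid_def)
  obtain K2 where K2: "t v2 = Some K2" "q2 \<in> Dm K2" using v2 by (auto simp: valid_def)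
  show "(v2 = v1 \<and> q2 = q1 @ [k]) \<or>
     (\<exists>a c. t v1 = Some (Inl a) \<and> g a (q1 @ [k]) = Some (Inr c) \<and> v2 = v1 @ [c] \<and> q2 = [])"
  proof (cases K1)
    case (Inr j)
    then have "flat_pos (blockify t) (enc t v2 q2) = None"
      using e fp_valid[OF v1] K1 by (simp add: flat_pos_snoc[of _ "enc t v1 q1", simplified] flat_step_def)
    then show ?thesis using ne by simp
  next
    case (Inl a)
    have res: "flat_pos (blockify t) (enc t v2 q2) = resolve (blockify t) v1 (q1 @ [k])"
      using e fp_valid[OF v1] K1 Inl by (simp add: flat_pos_snoc[of _ "enc t v1 q1", simplified] flat_step_def)
    have fp2: "flat_pos (blockify t) (enc t v2 q2) =
       (case K2 of Inl a \<Rightarrow> Some (Inl (v2, q2)) | Inr j \<Rightarrow> Some (Inr j))"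
      using fp_valid[OF v2] K2 by (simp split: sum.splits)
    show ?thesis
    proof (cases "g a (q1 @ [k])")
      case None then show ?thesis using res ne K1 Inl by (simp add: resolve_def blockify_def)
    next
      case (Some y)
      show ?thesis
      proof (cases y)
        case (Inl c)
        then show ?thesis using res fp2 K1 \<open>K1 = Inl a\<close> Some by (auto simp: resolve_def blockify_def split: sum.splits)
      next
        case (Inr c)
        show ?thesis
        proof (cases "t (v1 @ [c])")
          case None then show ?thesis using res ne K1 \<open>K1 = Inl a\<close> Some Inr by (simp add: resolve_def blockify_def)
        next
          case (Some z)
          show ?thesis
          proof (cases z)
            case (Inl a')
            then show ?thesis using res fp2 K1 \<open>K1 = Inl a\<close> \<open>g a (q1 @ [k]) = Some y\<close> \<open>y = Inr c\<close> Some
              by (auto simp: resolve_def blockify_def split: sum.splits)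
          next
            case (Inr j)
            then have "K2 = Inr j" and "v2 = v1 @ [c] \<or> True"
              using res fp2 K1 \<open>K1 = Inl a\<close> \<open>g a (q1 @ [k]) = Some y\<close> \<open>y = Inr c\<close> Some
              by (auto simp: resolve_def blockify_def split: sum.splits)
            then have "v2 = v1 @ [c]" using wf_uniq[OF wt] K2 Some Inr by metis
            moreover have "q2 = []" using K2 \<open>K2 = Inr j\<close> by (simp add: Dm_def)
            ultimately show ?thesis using K1 \<open>K1 = Inl a\<close> \<open>g a (q1 @ [k]) = Some y\<close> \<open>y = Inr c\<close> by auto
          qed
        qed
      qed
    qed
  qed
next
  assume "(v2 = v1 \<and> q2 = q1 @ [k]) \<or>
     (\<exists>a c. t v1 = Some (Inl a) \<and> g a (q1 @ [k]) = Some (Inr c) \<and> v2 = v1 @ [c] \<and> q2 = [])"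
  then show "enc t v2 q2 = enc t v1 q1 @ [k]"
  proof
    assume "v2 = v1 \<and> q2 = q1 @ [k]" then show ?thesis by (simp add: enc_def)
  next
    assume "\<exists>a c. t v1 = Some (Inl a) \<and> g a (q1 @ [k]) = Some (Inr c) \<and> v2 = v1 @ [c] \<and> q2 = []"
    then obtain a c where tv: "t v1 = Some (Inl a)" and gc: "g a (q1 @ [k]) = Some (Inr c)"
      and "v2 = v1 @ [c]" "q2 = []" by blast
    moreover have "holepos (g a) c = q1 @ [k]" using holepos_eq[OF g_wf[OF t_Sig[OF tv]] gc] .
    ultimately show ?thesis by (simp add: enc_def bp_snoc hstep_Inl[of t v1 a, OF tv])
  qed
qed

lemma enc_root: "valid t v q \<Longrightarrow> enc t v q = [] \<longleftrightarrow> v = [] \<and> q = []"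
proof -
  assume vv: "valid t v q"
  have "bp t v = [] \<Longrightarrow> v = []"
  proof (cases v rule: rev_cases)
    case (snoc v0 c)
    assume b: "bp t v = []"
    have "RB t v" using vv by (simp add: valid_def)
    then obtain a where tv: "t v0 = Some (Inl a)" and h: "hashole (g a) c" using RB_snoc snoc by blast
    have "holepos (g a) c \<noteq> []" using holepos_ne[OF g_wf[OF t_Sig[OF tv]] h] .
    then show ?thesis using b snoc by (simp add: bp_snoc hstep_Inl[of t v0 a, OF tv])
  qed simp
  then show ?thesis by (auto simp: enc_def)
qed

end

end


definition FTrue :: "'a fo" where "FTrue = FNeg (FEx 0 (FNeg (FEq 0 0)))"
definition FFalse :: "'a fo" where "FFalse = FNeg FTrue"
definition FOr :: "'a fo \<Rightarrow> 'a fo \<Rightarrow> 'a fo" where "FOr f g = FNeg (FConj (FNeg f) (FNeg g))"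

fun fdisj :: "'a fo list \<Rightarrow> 'a fo" where
  "fdisj [] = FFalse"
| "fdisj (f # fs) = FOr f (fdisj fs)"

fun fconj :: "'a fo list \<Rightarrow> 'a fo" where
  "fconj [] = FTrue"
| "fconj (f # fs) = FConj f (fconj fs)"

lemma holds_FTrue[simp]: "holds t FTrue e" by (simp add: FTrue_def)
lemma holds_FFalse[simp]: "\<not> holds t FFalse e" by (simp add: FFalse_def)
lemma holds_FOr[simp]: "holds t (FOr f g) e \<longleftrightarrow> holds t f e \<or> holds t g e" by (simp add: FOr_def)
lemma fv_FTrue[simp]: "fv FTrue = {}" by (simp add: FTrue_def)
lemma fv_FFalse[simp]: "fv FFalse = {}" by (simp add: FFalse_def)
lemma fv_FOr[simp]: "fv (FOr f g) = fv f \<union> fv g" by (simp add: FOr_def)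
lemma sig_FTrue[simp]: "fo_sig A n FTrue" by (simp add: FTrue_def)
lemma sig_FFalse[simp]: "fo_sig A n FFalse" by (simp add: FFalse_def)
lemma sig_FOr[simp]: "fo_sig A n (FOr f g) \<longleftrightarrow> fo_sig A n f \<and> fo_sig A n g" by (simp add: FOr_def)

lemma holds_fdisj[simp]: "holds t (fdisj fs) e \<longleftrightarrow> (\<exists>f\<in>set fs. holds t f e)"
  by (induction fs) auto
lemma fv_fdisj[simp]: "fv (fdisj fs) = \<Union> (fv ` set fs)"
  by (induction fs) auto
lemma sig_fdisj[simp]: "fo_sig A n (fdisj fs) \<longleftrightarrow> (\<forall>f\<in>set fs. fo_sig A n f)"
  by (induction fs) auto
lemma holds_fconj[simp]: "holds t (fconj fs) e \<longleftrightarrow> (\<forall>f\<in>set fs. holds t f e)"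
  by (induction fs) auto
lemma fv_fconj[simp]: "fv (fconj fs) = \<Union> (fv ` set fs)"
  by (induction fs) auto
lemma sig_fconj[simp]: "fo_sig A n (fconj fs) \<longleftrightarrow> (\<forall>f\<in>set fs. fo_sig A n f)"
  by (induction fs) auto

lemma holds_cong: "\<forall>i\<in>fv f. e i = e' i \<Longrightarrow> holds t f e = holds t f e'"
proof (induction f arbitrary: e e')
  case (FEx x f)
  have "holds t f (e(x := p)) = holds t f (e'(x := p))" for p
    by (rule FEx.IH) (use FEx.prems in auto)
  then show ?case by simp
next
  case (FNeg f) then show ?case by simp
next
  case (FConj f1 f2)
  have 1: "holds t f1 e = holds t f1 e'" by (rule FConj.IH(1)) (use FConj.prems in auto)
  have 2: "holds t f2 e = holds t f2 e'" by (rule FConj.IH(2)) (use FConj.prems in auto)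
  show ?case by (simp add: 1 2)
next
  case (FLe x y) then show ?case by simp
next
  case (FSucc i x y) then show ?case by simp
next
  case (FLab c x) then show ?case by simp
next
  case (FVar i x) then show ?case by simp
next
  case (FRoot x) then show ?case by simp
next
  case (FEq x y) then show ?case by simp
qed

lemma nat_pair_bound: "(a::nat) < N1 \<Longrightarrow> b < N2 \<Longrightarrow> a * N2 + b < N1 * N2"
proof -
  assume a: "a < N1" and b: "b < N2"
  have "a * N2 + b < a * N2 + N2" using b by simp
  also have "\<dots> = Suc a * N2" by simp
  also have "\<dots> \<le> N1 * N2" using a by (intro mult_right_mono) auto
  finally show ?thesis .
qed

lemma sum_pow2_lt: "sum ((^) (2::nat)) {..<N} < 2 ^ N"
  by (induction N) auto

lemma set_encode_lt: "S \<subseteq> {..<N} \<Longrightarrow> set_encode S < 2 ^ N"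
proof -
  assume S: "S \<subseteq> {..<N}"
  have "set_encode S = sum ((^) 2) S" by (simp add: set_encode_def)
  also have "\<dots> \<le> sum ((^) 2) {..<N}" by (rule sum_mono2) (use S in auto)
  also have "\<dots> < 2 ^ N" by (rule sum_pow2_lt)
  finally show ?thesis .
qed

lemma ex_app_prefix: "(\<exists>r. y = x @ r) \<longleftrightarrow> prefix x y"
  by (auto simp: prefix_def)

definition fresh :: "nat set \<Rightarrow> nat" where
  "fresh B = Suc (Max (insert 0 B))"

lemma fresh_gt: "finite B \<Longrightarrow> b \<in> B \<Longrightarrow> b < fresh B"
  unfolding fresh_def by (simp add: le_imp_less_Suc)

lemma fresh_notin: "finite B \<Longrightarrow> fresh B \<notin> B"
  using fresh_gt by blast

section \<open>The translation\<close>

locale tr = blk Sig ar n G arG g for Sig :: "'a set" and ar n and G :: "'b set" and arG g +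
  assumes finS: "finite Sig"
begin

definition inv :: "'a rtree \<Rightarrow> (nat \<Rightarrow> nat) \<Rightarrow> (nat \<Rightarrow> 'a + nat) \<Rightarrow> nat set \<Rightarrow> nat set
    \<Rightarrow> (nat \<Rightarrow> nat list) \<Rightarrow> (nat \<Rightarrow> nat list) \<Rightarrow> bool" where
  "inv t \<beta> L B V ve qe \<longleftrightarrow> (\<forall>b\<in>B. RB t (ve b) \<and> t (ve b) = Some (L b)) \<and> inj_on ve B \<and>
     (\<forall>i\<in>V. \<beta> i \<in> B \<and> qe i \<in> Dm (L (\<beta> i)))"

definition good :: "(nat \<Rightarrow> nat) \<Rightarrow> (nat \<Rightarrow> 'a + nat) \<Rightarrow> nat set \<Rightarrow> nat set
    \<Rightarrow> ('a rtree \<Rightarrow> (nat \<Rightarrow> nat list) \<Rightarrow> (nat \<Rightarrow> nat list) \<Rightarrow> bool) \<Rightarrow> bool" where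
  "good \<beta> L B V \<Phi> \<longleftrightarrow> (\<exists>N col \<theta>. (\<forall>b qe. col b qe < (N::nat)) \<and>
     (\<forall>b qe qe'. (\<forall>i\<in>V. \<beta> i = b \<longrightarrow> qe i = qe' i) \<longrightarrow> col b qe = col b qe') \<and>
     (\<forall>c. fo_sig Sig n (\<theta> c) \<and> fv (\<theta> c) \<subseteq> B) \<and>
     (\<forall>t ve qe. wf_tree Sig ar n t \<longrightarrow> inv t \<beta> L B V ve qe \<longrightarrow>
        (\<Phi> t ve qe \<longleftrightarrow> holds t (\<theta> (\<lambda>b. col b qe)) ve)))"

lemma goodI:
  assumes "\<And>b qe. col b qe < (N::nat)"
    and "\<And>b qe qe'. (\<And>i. i \<in> V \<Longrightarrow> \<beta> i = b \<Longrightarrow> qe i = qe' i) \<Longrightarrow> col b qe = col b qe'"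
    and "\<And>c. fo_sig Sig n (\<theta> c)" and "\<And>c. fv (\<theta> c) \<subseteq> B"
    and "\<And>t ve qe. wf_tree Sig ar n t \<Longrightarrow> inv t \<beta> L B V ve qe \<Longrightarrow>
        (\<Phi> t ve qe \<longleftrightarrow> holds t (\<theta> (\<lambda>b. col b qe)) ve)"
  shows "good \<beta> L B V \<Phi>"
  unfolding good_def
  apply (rule exI[of _ N], rule exI[of _ col], rule exI[of _ \<theta>])
  apply (intro conjI allI impI)
  subgoal by (rule assms(1))
  subgoal by (rule assms(2)) blast
  subgoal by (rule assms(3))
  subgoal by (rule assms(4))
  subgoal by (rule assms(5))
  done

lemma good_cong:
  assumes "good \<beta> L B V \<Phi>"
    and "\<And>t ve qe. wf_tree Sig ar n t \<Longrightarrow> inv t \<beta> L B V ve qe \<Longrightarrow> \<Phi> t ve qe = \<Phi>' t ve qe"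
  shows "good \<beta> L B V \<Phi>'"
proof -
  obtain N col \<theta> where a: "\<forall>b qe. col b qe < (N::nat)"
    "\<forall>b qe qe'. (\<forall>i\<in>V. \<beta> i = b \<longrightarrow> qe i = qe' i) \<longrightarrow> col b qe = col b qe'"
    "\<forall>c. fo_sig Sig n (\<theta> c) \<and> fv (\<theta> c) \<subseteq> B"
    "\<forall>t ve qe. wf_tree Sig ar n t \<longrightarrow> inv t \<beta> L B V ve qe \<longrightarrow>
        (\<Phi> t ve qe \<longleftrightarrow> holds t (\<theta> (\<lambda>b. col b qe)) ve)" using assms(1) unfolding good_def by blast
  show ?thesis
  proof (rule goodI[where col = col and N = N and \<theta> = \<theta>])
    fix t ve qe assume "wf_tree Sig ar n t" "inv t \<beta> L B V ve qe"
    then show "\<Phi>' t ve qe \<longleftrightarrow> holds t (\<theta> (\<lambda>b. col b qe)) ve" using a(4) assms(2) by metis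
  qed (use a in \<open>blast+\<close>)
qed

lemma good_neg: "good \<beta> L B V \<Phi> \<Longrightarrow> good \<beta> L B V (\<lambda>t ve qe. \<not> \<Phi> t ve qe)"
proof -
  assume "good \<beta> L B V \<Phi>"
  then obtain N col \<theta> where a: "\<forall>b qe. col b qe < (N::nat)"
    "\<forall>b qe qe'. (\<forall>i\<in>V. \<beta> i = b \<longrightarrow> qe i = qe' i) \<longrightarrow> col b qe = col b qe'"
    "\<forall>c. fo_sig Sig n (\<theta> c) \<and> fv (\<theta> c) \<subseteq> B"
    "\<forall>t ve qe. wf_tree Sig ar n t \<longrightarrow> inv t \<beta> L B V ve qe \<longrightarrow>
        (\<Phi> t ve qe \<longleftrightarrow> holds t (\<theta> (\<lambda>b. col b qe)) ve)" unfolding good_def by blast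
  show ?thesis
  proof (rule goodI[where col = col and N = N and \<theta> = "\<lambda>c. FNeg (\<theta> c)"])
    fix t ve qe assume "wf_tree Sig ar n t" "inv t \<beta> L B V ve qe"
    then show "(\<not> \<Phi> t ve qe) \<longleftrightarrow> holds t (FNeg (\<theta> (\<lambda>b. col b qe))) ve" using a(4) by simp
  qed (use a in \<open>simp_all\<close>)
qed

lemma good_conj: "good \<beta> L B V \<Phi>1 \<Longrightarrow> good \<beta> L B V \<Phi>2 \<Longrightarrow> good \<beta> L B V (\<lambda>t ve qe. \<Phi>1 t ve qe \<and> \<Phi>2 t ve qe)"
proof -
  assume "good \<beta> L B V \<Phi>1"
  then obtain N1 col1 \<theta>1 where a: "\<forall>b qe. col1 b qe < (N1::nat)"
    "\<forall>b qe qe'. (\<forall>i\<in>V. \<beta> i = b \<longrightarrow> qe i = qe' i) \<longrightarrow> col1 b qe = col1 b qe'"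
    "\<forall>c. fo_sig Sig n (\<theta>1 c) \<and> fv (\<theta>1 c) \<subseteq> B"
    "\<forall>t ve qe. wf_tree Sig ar n t \<longrightarrow> inv t \<beta> L B V ve qe \<longrightarrow>
        (\<Phi>1 t ve qe \<longleftrightarrow> holds t (\<theta>1 (\<lambda>b. col1 b qe)) ve)" unfolding good_def by blast
  assume "good \<beta> L B V \<Phi>2"
  then obtain N2 col2 \<theta>2 where b: "\<forall>b qe. col2 b qe < (N2::nat)"
    "\<forall>b qe qe'. (\<forall>i\<in>V. \<beta> i = b \<longrightarrow> qe i = qe' i) \<longrightarrow> col2 b qe = col2 b qe'"
    "\<forall>c. fo_sig Sig n (\<theta>2 c) \<and> fv (\<theta>2 c) \<subseteq> B"
    "\<forall>t ve qe. wf_tree Sig ar n t \<longrightarrow> inv t \<beta> L B V ve qe \<longrightarrow>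
        (\<Phi>2 t ve qe \<longleftrightarrow> holds t (\<theta>2 (\<lambda>b. col2 b qe)) ve)" unfolding good_def by blast
  have dm: "(col1 b qe * N2 + col2 b qe) div N2 = col1 b qe" "(col1 b qe * N2 + col2 b qe) mod N2 = col2 b qe" "col2 b qe mod N2 = col2 b qe" for b qe
    using b(1) by (auto elim!: allE[of _ b] allE[of _ qe])
  show ?thesis
  proof (rule goodI[where col = "\<lambda>b qe. col1 b qe * N2 + col2 b qe" and N = "N1 * N2"
        and \<theta> = "\<lambda>c. FConj (\<theta>1 (\<lambda>b. c b div N2)) (\<theta>2 (\<lambda>b. c b mod N2))"])
    show "col1 b qe * N2 + col2 b qe < N1 * N2" for b qe using nat_pair_bound a(1) b(1) by blast
    show "col1 b qe * N2 + col2 b qe = col1 b qe' * N2 + col2 b qe'"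
      if "\<And>i. i \<in> V \<Longrightarrow> \<beta> i = b \<Longrightarrow> qe i = qe' i" for b qe qe'
      using a(2) b(2) that by metis
    show "fo_sig Sig n (FConj (\<theta>1 (\<lambda>b. c b div N2)) (\<theta>2 (\<lambda>b. c b mod N2)))" for c
      using a(3) b(3) by simp
    show "fv (FConj (\<theta>1 (\<lambda>b. c b div N2)) (\<theta>2 (\<lambda>b. c b mod N2))) \<subseteq> B" for c
      using a(3) b(3) by simp
    fix t ve qe assume "wf_tree Sig ar n t" "inv t \<beta> L B V ve qe"
    then show "(\<Phi>1 t ve qe \<and> \<Phi>2 t ve qe) \<longleftrightarrow> holds t (FConj (\<theta>1 (\<lambda>b. (\<lambda>b. col1 b qe * N2 + col2 b qe) b div N2))
       (\<theta>2 (\<lambda>b. (\<lambda>b. col1 b qe * N2 + col2 b qe) b mod N2))) ve"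
      using a(4) b(4) by (simp add: dm)
  qed
qed

lemma good_disj: "good \<beta> L B V \<Phi>1 \<Longrightarrow> good \<beta> L B V \<Phi>2 \<Longrightarrow> good \<beta> L B V (\<lambda>t ve qe. \<Phi>1 t ve qe \<or> \<Phi>2 t ve qe)"
proof -
  assume "good \<beta> L B V \<Phi>1" "good \<beta> L B V \<Phi>2"
  then have "good \<beta> L B V (\<lambda>t ve qe. \<not> \<Phi>1 t ve qe)" "good \<beta> L B V (\<lambda>t ve qe. \<not> \<Phi>2 t ve qe)"
    using good_neg by blast+
  then have "good \<beta> L B V (\<lambda>t ve qe. \<not> \<Phi>1 t ve qe \<and> \<not> \<Phi>2 t ve qe)" by (rule good_conj)
  then have "good \<beta> L B V (\<lambda>t ve qe. \<not> (\<not> \<Phi>1 t ve qe \<and> \<not> \<Phi>2 t ve qe))" by (rule good_neg)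
  then show ?thesis by simp
qed

lemma good_const: "good \<beta> L B V (\<lambda>t ve qe. P)"
  by (rule goodI[where col = "\<lambda>b qe. 0" and N = 1 and \<theta> = "\<lambda>c. if P then FTrue else FFalse"]) auto

lemma good_Bex: "finite F \<Longrightarrow> (\<And>x. x \<in> F \<Longrightarrow> good \<beta> L B V (P x)) \<Longrightarrow> good \<beta> L B V (\<lambda>t ve qe. \<exists>x\<in>F. P x t ve qe)"
proof (induction F rule: finite_induct)
  case empty then show ?case using good_const[of \<beta> L B V False] by simp
next
  case (insert x F)
  have "good \<beta> L B V (P x)" using insert.prems by simp
  moreover have "good \<beta> L B V (\<lambda>t ve qe. \<exists>x\<in>F. P x t ve qe)" using insert.IH insert.prems by simp
  ultimately have "good \<beta> L B V (\<lambda>t ve qe. P x t ve qe \<or> (\<exists>x\<in>F. P x t ve qe))"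
    by (rule good_disj)
  then show ?case by simp
qed

lemma good_local:
  assumes "\<And>qe. F qe < (N::nat)"
    and "\<And>qe qe'. (\<And>i. i \<in> V \<Longrightarrow> \<beta> i = bb \<Longrightarrow> qe i = qe' i) \<Longrightarrow> F qe = F qe'"
    and "\<And>m. fo_sig Sig n (\<Theta> m)" and "\<And>m. fv (\<Theta> m) \<subseteq> B"
    and "\<And>t ve qe. wf_tree Sig ar n t \<Longrightarrow> inv t \<beta> L B V ve qe \<Longrightarrow> \<Phi> t ve qe \<longleftrightarrow> holds t (\<Theta> (F qe)) ve"
  shows "good \<beta> L B V \<Phi>"
proof (rule goodI[where col = "\<lambda>b qe. if b = bb then F qe else 0" and N = N and \<theta> = "\<lambda>c. \<Theta> (c bb)"])
  show "(if b = bb then F qe else 0) < N" for b qe using assms(1)[of qe] by auto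
next
  show "(if b = bb then F qe else 0) = (if b = bb then F qe' else 0)"
    if "\<And>i. i \<in> V \<Longrightarrow> \<beta> i = b \<Longrightarrow> qe i = qe' i" for b qe qe'
    using assms(2)[of qe qe'] that by auto
next
  fix t ve qe assume "wf_tree Sig ar n t" "inv t \<beta> L B V ve qe"
  then show "\<Phi> t ve qe \<longleftrightarrow> holds t (\<Theta> ((\<lambda>b. if b = bb then F qe else 0) bb)) ve" using assms(5) by simp
next
  show "fo_sig Sig n (\<Theta> (c bb))" for c by (rule assms(3))
  show "fv (\<Theta> (c bb)) \<subseteq> B" for c by (rule assms(4))
qed

definition sem :: "'b fo \<Rightarrow> (nat \<Rightarrow> nat) \<Rightarrow> 'a rtree \<Rightarrow> (nat \<Rightarrow> nat list) \<Rightarrow> (nat \<Rightarrow> nat list) \<Rightarrow> bool" where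
  "sem \<psi> \<beta> t ve qe = holds (flat (blockify t)) \<psi> (\<lambda>i. enc t (ve (\<beta> i)) (qe i))"

lemma inv_valid: "inv t \<beta> L B V ve qe \<Longrightarrow> i \<in> V \<Longrightarrow> valid t (ve (\<beta> i)) (qe i)"
  unfolding inv_def valid_def by blast

lemma inv_lab: "inv t \<beta> L B V ve qe \<Longrightarrow> i \<in> V \<Longrightarrow> t (ve (\<beta> i)) = Some (L (\<beta> i))"
  unfolding inv_def by blast

lemma inv_Dm: "inv t \<beta> L B V ve qe \<Longrightarrow> i \<in> V \<Longrightarrow> qe i \<in> Dm (L (\<beta> i))"
  unfolding inv_def by blast

lemma inv_inj: "inv t \<beta> L B V ve qe \<Longrightarrow> i \<in> V \<Longrightarrow> j \<in> V \<Longrightarrow> ve (\<beta> i) = ve (\<beta> j) \<Longrightarrow> \<beta> i = \<beta> j"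
  unfolding inv_def by (meson inj_onD)

lemma good_FRoot:
  assumes iV: "i \<in> V" and bV: "\<beta> ` V \<subseteq> B"
  shows "good \<beta> L B V (sem (FRoot i) \<beta>)"
proof (rule good_local[where bb = "\<beta> i" and F = "\<lambda>qe. if qe i = [] then 1 else 0" and N = 2
      and \<Theta> = "\<lambda>m. if m = 1 then FRoot (\<beta> i) else FFalse"])
  show "fv (if m = 1 then FRoot (\<beta> i) else FFalse) \<subseteq> B" for m using iV bV by auto
  show "(if qe i = [] then 1 else 0) = (if qe' i = [] then 1 else 0)"
    if "\<And>i'. i' \<in> V \<Longrightarrow> \<beta> i' = \<beta> i \<Longrightarrow> qe i' = qe' i'" for qe qe' :: "nat \<Rightarrow> nat list"
    using that[OF iV] by simp
  fix t ve qe assume wt: "wf_tree Sig ar n t" and iv: "inv t \<beta> L B V ve qe"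
  have v: "valid t (ve (\<beta> i)) (qe i)" using inv_valid[OF iv iV] .
  show "sem (FRoot i) \<beta> t ve qe \<longleftrightarrow> holds t (if (if qe i = [] then 1 else 0) = (1::nat) then FRoot (\<beta> i) else FFalse) ve"
    unfolding sem_def using enc_root[OF wt v] by auto
qed auto

lemma good_FLab:
  assumes iV: "i \<in> V" and bV: "\<beta> ` V \<subseteq> B"
  shows "good \<beta> L B V (sem (FLab c i) \<beta>)"
proof (rule good_local[where bb = "\<beta> i" and F = "\<lambda>qe. if lab_of (L (\<beta> i)) (qe i) = Some (Inl c) then 1 else 0" and N = 2
      and \<Theta> = "\<lambda>m. if m = 1 then FTrue else FFalse"])
  show "(if lab_of (L (\<beta> i)) (qe i) = Some (Inl c) then 1 else 0) = (if lab_of (L (\<beta> i)) (qe' i) = Some (Inl c) then 1 else 0)"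
    if "\<And>i'. i' \<in> V \<Longrightarrow> \<beta> i' = \<beta> i \<Longrightarrow> qe i' = qe' i'" for qe qe' :: "nat \<Rightarrow> nat list"
    using that[OF iV] by simp
  fix t ve qe assume wt: "wf_tree Sig ar n t" and iv: "inv t \<beta> L B V ve qe"
  have v: "valid t (ve (\<beta> i)) (qe i)" using inv_valid[OF iv iV] .
  show "sem (FLab c i) \<beta> t ve qe \<longleftrightarrow> holds t (if (if lab_of (L (\<beta> i)) (qe i) = Some (Inl c) then 1 else 0) = (1::nat) then FTrue else FFalse) ve"
    unfolding sem_def using flat_enc[OF wt v] inv_lab[OF iv iV] by (simp add: lab_def lab_of_def)
qed auto

lemma good_FVar:
  assumes iV: "i \<in> V" and bV: "\<beta> ` V \<subseteq> B"
  shows "good \<beta> L B V (sem (FVar j i) \<beta>)"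
proof (rule good_local[where bb = "\<beta> i" and F = "\<lambda>qe. if lab_of (L (\<beta> i)) (qe i) = Some (Inr j) then 1 else 0" and N = 2
      and \<Theta> = "\<lambda>m. if m = 1 then FTrue else FFalse"])
  show "(if lab_of (L (\<beta> i)) (qe i) = Some (Inr j) then 1 else 0) = (if lab_of (L (\<beta> i)) (qe' i) = Some (Inr j) then 1 else 0)"
    if "\<And>i'. i' \<in> V \<Longrightarrow> \<beta> i' = \<beta> i \<Longrightarrow> qe i' = qe' i'" for qe qe' :: "nat \<Rightarrow> nat list"
    using that[OF iV] by simp
  fix t ve qe assume wt: "wf_tree Sig ar n t" and iv: "inv t \<beta> L B V ve qe"
  have v: "valid t (ve (\<beta> i)) (qe i)" using inv_valid[OF iv iV] .
  show "sem (FVar j i) \<beta> t ve qe \<longleftrightarrow> holds t (if (if lab_of (L (\<beta> i)) (qe i) = Some (Inr j) then 1 else 0) = (1::nat) then FTrue else FFalse) ve"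
    unfolding sem_def using flat_enc[OF wt v] inv_lab[OF iv iV] by (simp add: lab_def lab_of_def)
qed auto

lemma good_FEq:
  assumes iV: "i \<in> V" and jV: "j \<in> V" and bV: "\<beta> ` V \<subseteq> B"
  shows "good \<beta> L B V (sem (FEq i j) \<beta>)"
proof (cases "\<beta> i = \<beta> j")
  case True
  show ?thesis
  proof (rule good_local[where bb = "\<beta> i" and F = "\<lambda>qe. if qe i = qe j then 1 else 0" and N = 2
        and \<Theta> = "\<lambda>m. if m = 1 then FTrue else FFalse"])
    show "(if qe i = qe j then 1 else 0) = (if qe' i = qe' j then 1 else 0)"
      if "\<And>i'. i' \<in> V \<Longrightarrow> \<beta> i' = \<beta> i \<Longrightarrow> qe i' = qe' i'" for qe qe' :: "nat \<Rightarrow> nat list"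
      using that[OF iV] that[OF jV] True by simp
    fix t ve qe assume wt: "wf_tree Sig ar n t" and iv: "inv t \<beta> L B V ve qe"
    show "sem (FEq i j) \<beta> t ve qe \<longleftrightarrow> holds t (if (if qe i = qe j then 1 else 0) = (1::nat) then FTrue else FFalse) ve"
      unfolding sem_def using True by (simp add: enc_def)
  qed auto
next
  case False
  show ?thesis
  proof (rule good_local[where bb = "\<beta> i" and F = "\<lambda>qe. 0" and N = 1 and \<Theta> = "\<lambda>m. FFalse"])
    fix t ve qe assume wt: "wf_tree Sig ar n t" and iv: "inv t \<beta> L B V ve qe"
    have "enc t (ve (\<beta> i)) (qe i) \<noteq> enc t (ve (\<beta> j)) (qe j)"
      using enc_inj[OF wt inv_valid[OF iv iV] inv_valid[OF iv jV]] inv_inj[OF iv iV jV] False by blast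
    then show "sem (FEq i j) \<beta> t ve qe \<longleftrightarrow> holds t FFalse ve" unfolding sem_def by simp
  qed auto
qed

lemma good_FLe:
  assumes iV: "i \<in> V" and jV: "j \<in> V" and bV: "\<beta> ` V \<subseteq> B" and fB: "finite B"
  shows "good \<beta> L B V (sem (FLe i j) \<beta>)"
proof (cases "\<beta> i = \<beta> j")
  case True
  show ?thesis
  proof (rule good_local[where bb = "\<beta> i" and F = "\<lambda>qe. if prefix (qe i) (qe j) then 1 else 0" and N = 2
        and \<Theta> = "\<lambda>m. if m = 1 then FTrue else FFalse"])
    show "(if prefix (qe i) (qe j) then 1 else 0) = (if prefix (qe' i) (qe' j) then 1 else 0)"
      if "\<And>i'. i' \<in> V \<Longrightarrow> \<beta> i' = \<beta> i \<Longrightarrow> qe i' = qe' i'" for qe qe' :: "nat \<Rightarrow> nat list"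
      using that[OF iV] that[OF jV] True by simp
    fix t ve qe assume wt: "wf_tree Sig ar n t" and iv: "inv t \<beta> L B V ve qe"
    show "sem (FLe i j) \<beta> t ve qe \<longleftrightarrow> holds t (if (if prefix (qe i) (qe j) then 1 else 0) = (1::nat) then FTrue else FFalse) ve"
      unfolding sem_def using True by (simp add: enc_def ex_app_prefix)
  qed auto
next
  case False
  note ne = False
  show ?thesis
  proof (cases "L (\<beta> i)")
    case (Inr jj)
    show ?thesis
    proof (rule good_local[where bb = "\<beta> i" and F = "\<lambda>qe. 0" and N = 1 and \<Theta> = "\<lambda>m. FFalse"])
      fix t ve qe assume wt: "wf_tree Sig ar n t" and iv: "inv t \<beta> L B V ve qe"
      have "\<not> XC t (ve (\<beta> i)) (qe i) (ve (\<beta> j))"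
        unfolding XC_def[OF wt] using inv_lab[OF iv iV] Inr by simp
      then have "\<not> prefix (enc t (ve (\<beta> i)) (qe i)) (enc t (ve (\<beta> j)) (qe j))"
        using enc_prefix[OF wt inv_valid[OF iv iV] inv_valid[OF iv jV]] inv_inj[OF iv iV jV] False
          by auto
      then show "sem (FLe i j) \<beta> t ve qe \<longleftrightarrow> holds t FFalse ve" unfolding sem_def by (simp add: ex_app_prefix)
    qed auto
  next
    case (Inl a)
    define w where "w = fresh B"
    have wB: "w \<notin> B" using fresh_notin[OF fB] w_def by simp
    have biB: "\<beta> i \<in> B" "\<beta> j \<in> B" using iV jV bV by auto
    define S where "S = (\<lambda>qe::nat \<Rightarrow> nat list. {c. c < ar a \<and> hashole (g a) c \<and> prefix (qe i) (holepos (g a) c)})"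
    define \<Theta> :: "nat \<Rightarrow> 'a fo" where "\<Theta> = (\<lambda>m. fdisj (map (\<lambda>c. FEx w (FConj (FSucc c (\<beta> i) w) (FLe w (\<beta> j))))
        (filter (\<lambda>c. c \<in> set_decode m) [0..<ar a])))"
    show ?thesis
    proof (rule good_local[where bb = "\<beta> i" and F = "\<lambda>qe. set_encode (S qe)" and N = "2 ^ ar a" and \<Theta> = \<Theta>])
      show "set_encode (S qe) < 2 ^ ar a" for qe by (rule set_encode_lt) (auto simp: S_def)
      show "set_encode (S qe) = set_encode (S qe')"
        if "\<And>i'. i' \<in> V \<Longrightarrow> \<beta> i' = \<beta> i \<Longrightarrow> qe i' = qe' i'" for qe qe' :: "nat \<Rightarrow> nat list"
        using that[OF iV] by (simp add: S_def)
      show "fo_sig Sig n (\<Theta> m)" for m by (auto simp: \<Theta>_def)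
      show "fv (\<Theta> m) \<subseteq> B" for m using biB wB by (auto simp: \<Theta>_def)
      fix t ve qe assume wt: "wf_tree Sig ar n t" and iv: "inv t \<beta> L B V ve qe"
      have tv: "t (ve (\<beta> i)) = Some (Inl a)" using inv_lab[OF iv iV] Inl by simp
      have aS: "a \<in> Sig" using t_Sig[OF wt tv] .
      have v2: "valid t (ve (\<beta> j)) (qe j)" using inv_valid[OF iv jV] .
      have dom2: "t (ve (\<beta> j)) \<noteq> None" using v2 by (auto simp: valid_def RB_def)
      have fin: "finite (S qe)" by (auto simp: S_def)
      have "sem (FLe i j) \<beta> t ve qe \<longleftrightarrow> XC t (ve (\<beta> i)) (qe i) (ve (\<beta> j))"
        using enc_prefix[OF wt inv_valid[OF iv iV] v2] inv_inj[OF iv iV jV] False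
        unfolding sem_def by (auto simp: ex_app_prefix)
      also have "\<dots> \<longleftrightarrow> (\<exists>c. c \<in> S qe \<and> prefix (ve (\<beta> i) @ [c]) (ve (\<beta> j)))"
        unfolding XC_def[OF wt] S_def using tv hashole_lt[OF g_wf[OF aS]] by auto
      also have "\<dots> \<longleftrightarrow> holds t (\<Theta> (set_encode (S qe))) ve"
      proof -
        have ww: "(ve(w := p)) (\<beta> i) = ve (\<beta> i)" "(ve(w := p)) (\<beta> j) = ve (\<beta> j)" for p
          using wB biB by auto
        have "holds t (\<Theta> (set_encode (S qe))) ve \<longleftrightarrow>
           (\<exists>c\<in>S qe. \<exists>p. t p \<noteq> None \<and> p = ve (\<beta> i) @ [c] \<and> prefix p (ve (\<beta> j)))"
          unfolding \<Theta>_def using fin ww by (auto simp: S_def ex_app_prefix)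
        also have "\<dots> \<longleftrightarrow> (\<exists>c. c \<in> S qe \<and> prefix (ve (\<beta> i) @ [c]) (ve (\<beta> j)))"
          using wf_prefix'[OF wt dom2] by blast
        finally show ?thesis by simp
      qed
      finally show "sem (FLe i j) \<beta> t ve qe \<longleftrightarrow> holds t (\<Theta> (set_encode (S qe))) ve" .
    qed
  qed
qed

lemma good_FSucc:
  assumes iV: "i \<in> V" and jV: "j \<in> V" and bV: "\<beta> ` V \<subseteq> B" and fB: "finite B"
  shows "good \<beta> L B V (sem (FSucc k i j) \<beta>)"
proof (cases "\<beta> i = \<beta> j")
  case True
  show ?thesis
  proof (rule good_local[where bb = "\<beta> i" and F = "\<lambda>qe. if qe j = qe i @ [k] then 1 else 0" and N = 2
        and \<Theta> = "\<lambda>m. if m = 1 then FTrue else FFalse"])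
    show "(if qe j = qe i @ [k] then 1 else 0) = (if qe' j = qe' i @ [k] then 1 else 0)"
      if "\<And>i'. i' \<in> V \<Longrightarrow> \<beta> i' = \<beta> i \<Longrightarrow> qe i' = qe' i'" for qe qe' :: "nat \<Rightarrow> nat list"
      using that[OF iV] that[OF jV] True by simp
    fix t ve qe assume wt: "wf_tree Sig ar n t" and iv: "inv t \<beta> L B V ve qe"
    show "sem (FSucc k i j) \<beta> t ve qe \<longleftrightarrow> holds t (if (if qe j = qe i @ [k] then 1 else 0) = (1::nat) then FTrue else FFalse) ve"
      unfolding sem_def using True by (simp add: enc_def)
  qed auto
next
  case False
  show ?thesis
  proof (cases "L (\<beta> i)")
    case (Inr jj)
    show ?thesis
    proof (rule good_local[where bb = "\<beta> i" and F = "\<lambda>qe. 0" and N = 1 and \<Theta> = "\<lambda>m. FFalse"])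
      fix t ve qe assume wt: "wf_tree Sig ar n t" and iv: "inv t \<beta> L B V ve qe"
      have "enc t (ve (\<beta> j)) (qe j) \<noteq> enc t (ve (\<beta> i)) (qe i) @ [k]"
        using enc_succ[OF wt inv_valid[OF iv iV] inv_valid[OF iv jV]] inv_inj[OF iv iV jV] False
          inv_lab[OF iv iV] Inr by auto
      then show "sem (FSucc k i j) \<beta> t ve qe \<longleftrightarrow> holds t FFalse ve" unfolding sem_def by simp
    qed auto
  next
    case (Inl a)
    have biB: "\<beta> i \<in> B" "\<beta> j \<in> B" using iV jV bV by auto
    define F1 where "F1 = (\<lambda>qe::nat \<Rightarrow> nat list. case g a (qe i @ [k]) of Some (Inr c) \<Rightarrow> if c < ar a then Suc c else 0 | _ \<Rightarrow> 0)"
    define \<Phi>1 where "\<Phi>1 = (\<lambda>(t::'a rtree) (ve::nat \<Rightarrow> nat list) (qe::nat \<Rightarrow> nat list).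
       \<exists>c. g a (qe i @ [k]) = Some (Inr c) \<and> ve (\<beta> j) = ve (\<beta> i) @ [c])"
    have g1: "good \<beta> L B V \<Phi>1"
    proof (rule good_local[where bb = "\<beta> i" and F = F1 and N = "Suc (ar a)"
          and \<Theta> = "\<lambda>m. if m = 0 then FFalse else FSucc (m - 1) (\<beta> i) (\<beta> j)"])
      show "F1 qe < Suc (ar a)" for qe by (auto simp: F1_def split: option.splits sum.splits)
      show "F1 qe = F1 qe'" if "\<And>i'. i' \<in> V \<Longrightarrow> \<beta> i' = \<beta> i \<Longrightarrow> qe i' = qe' i'" for qe qe' :: "nat \<Rightarrow> nat list"
        using that[OF iV] by (simp add: F1_def)
      show "fv (if m = 0 then FFalse else FSucc (m - 1) (\<beta> i) (\<beta> j)) \<subseteq> B" for m using biB by auto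
      fix t ve qe assume wt: "wf_tree Sig ar n t" and iv: "inv t \<beta> L B V ve qe"
      have tv: "t (ve (\<beta> i)) = Some (Inl a)" using inv_lab[OF iv iV] Inl by simp
      have aS: "a \<in> Sig" using t_Sig[OF wt tv] .
      show "\<Phi>1 t ve qe \<longleftrightarrow> holds t (if F1 qe = 0 then FFalse else FSucc (F1 qe - 1) (\<beta> i) (\<beta> j)) ve"
        unfolding \<Phi>1_def F1_def using wf_Inr[OF g_wf[OF aS]]
        by (auto split: option.splits sum.splits)
    qed auto
    have g2: "good \<beta> L B V (\<lambda>t ve qe. qe j = [])"
    proof (rule good_local[where bb = "\<beta> j" and F = "\<lambda>qe. if qe j = [] then 1 else 0" and N = 2
          and \<Theta> = "\<lambda>m. if m = 1 then FTrue else FFalse"])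
      show "(if qe j = [] then 1 else 0) = (if qe' j = [] then 1 else 0)"
        if "\<And>i'. i' \<in> V \<Longrightarrow> \<beta> i' = \<beta> j \<Longrightarrow> qe i' = qe' i'" for qe qe' :: "nat \<Rightarrow> nat list"
        using that[OF jV] by simp
    qed auto
    show ?thesis
    proof (rule good_cong[OF good_conj[OF g1 g2]])
      fix t ve qe assume wt: "wf_tree Sig ar n t" and iv: "inv t \<beta> L B V ve qe"
      have tv: "t (ve (\<beta> i)) = Some (Inl a)" using inv_lab[OF iv iV] Inl by simp
      show "(\<Phi>1 t ve qe \<and> qe j = []) = sem (FSucc k i j) \<beta> t ve qe"
        using enc_succ[OF wt inv_valid[OF iv iV] inv_valid[OF iv jV]] inv_inj[OF iv iV jV] False tv
        unfolding sem_def \<Phi>1_def by auto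
    qed
  qed
qed


definition lst :: "'c set \<Rightarrow> 'c list" where
  "lst A = (SOME xs. set xs = A)"

lemma set_lst: "finite A \<Longrightarrow> set (lst A) = A"
  unfolding lst_def by (rule someI_ex) (rule finite_list)

definition badl :: "('a \<times> nat) list" where
  "badl = concat (map (\<lambda>a. map (\<lambda>c. (a, c)) (filter (\<lambda>c. \<not> hashole (g a) c) [0..<ar a])) (lst Sig))"

lemma set_badl: "set badl = {(a, c). a \<in> Sig \<and> c < ar a \<and> \<not> hashole (g a) c}"
  unfolding badl_def using set_lst[OF finS] by auto

definition RBF :: "nat \<Rightarrow> 'a fo" where
  "RBF z = fconj (map (\<lambda>(a, c). FNeg (FEx (Suc z) (FEx (Suc (Suc z))
      (fconj [FLab a (Suc z), FSucc c (Suc z) (Suc (Suc z)), FLe (Suc (Suc z)) z])))) badl)"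

definition KF :: "'a + nat \<Rightarrow> nat \<Rightarrow> 'a fo" where
  "KF K z = (case K of Inl a \<Rightarrow> FLab a z | Inr j \<Rightarrow> FVar j z)"

definition Kinds :: "('a + nat) set" where
  "Kinds = Inl ` Sig \<union> Inr ` {..<n}"

lemma finite_Kinds: "finite Kinds"
  unfolding Kinds_def using finS by simp

lemma fv_RBF: "fv (RBF z) \<subseteq> {z}"
  unfolding RBF_def by auto

lemma sig_RBF: "fo_sig Sig n (RBF z)"
  unfolding RBF_def using set_badl by auto

lemma fv_KF: "fv (KF K z) = {z}"
  unfolding KF_def by (auto split: sum.splits)

lemma sig_KF: "K \<in> Kinds \<Longrightarrow> fo_sig Sig n (KF K z)"
  unfolding KF_def Kinds_def by auto

lemma holds_KF: "holds t (KF K z) e \<longleftrightarrow> t (e z) = Some K"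
  unfolding KF_def by (auto split: sum.splits)

lemma holds_RBF:
  assumes wt: "wf_tree Sig ar n t" and dom: "t (e z) \<noteq> None"
  shows "holds t (RBF z) e \<longleftrightarrow> RB t (e z)"
proof -
  have "holds t (RBF z) e \<longleftrightarrow> (\<forall>(a, c)\<in>set badl. \<not> (\<exists>y. t y \<noteq> None \<and> (\<exists>w. t w \<noteq> None \<and>
          t y = Some (Inl a) \<and> w = y @ [c] \<and> prefix w (e z))))"
    unfolding RBF_def by (auto simp: ex_app_prefix split_def)
  also have "\<dots> \<longleftrightarrow> RB t (e z)"
  proof
    assume H: "\<forall>(a, c)\<in>set badl. \<not> (\<exists>y. t y \<noteq> None \<and> (\<exists>w. t w \<noteq> None \<and>
          t y = Some (Inl a) \<and> w = y @ [c] \<and> prefix w (e z)))"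
    let ?v = "e z"
    show "RB t ?v"
      unfolding RB_def
    proof (intro conjI allI impI)
      show "t ?v \<noteq> None" by (rule dom)
      fix i assume i: "i < length ?v"
      have pre: "prefix (take i ?v @ [?v ! i]) ?v"
        using i by (metis take_Suc_conv_app_nth take_is_prefix)
      have tw: "t (take i ?v @ [?v ! i]) \<noteq> None" using wf_prefix'[OF wt dom pre] .
      obtain a where ta: "t (take i ?v) = Some (Inl a)" and lt: "?v ! i < ar a"
        using wf_child[OF wt tw] by blast
      have aS: "a \<in> Sig" using t_Sig[OF wt ta] .
      show "\<exists>a. t (take i ?v) = Some (Inl a) \<and> hashole (g a) (?v ! i)"
      proof (rule exI[of _ a], rule conjI[OF ta], rule ccontr)
        assume "\<not> hashole (g a) (?v ! i)"
        then have "(a, ?v ! i) \<in> set badl" using set_badl aS lt by auto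
        then show False using H ta tw pre by fastforce
      qed
    qed
  next
    assume r: "RB t (e z)"
    show "\<forall>(a, c)\<in>set badl. \<not> (\<exists>y. t y \<noteq> None \<and> (\<exists>w. t w \<noteq> None \<and>
          t y = Some (Inl a) \<and> w = y @ [c] \<and> prefix w (e z)))"
    proof (clarify)
      fix a c y assume bad: "(a, c) \<in> set badl" and ty: "t y = Some (Inl a)" and pw: "prefix (y @ [c]) (e z)"
      then obtain r' where ez: "e z = y @ [c] @ r'" by (auto simp: prefix_def)
      have "length y < length (e z)" using ez by simp
      then obtain a' where "t (take (length y) (e z)) = Some (Inl a')" "hashole (g a') (e z ! length y)"
        using r unfolding RB_def by blast
      then have "hashole (g a) c" using ez ty by simp
      then show False using bad set_badl by auto
    qed
  qed
  finally show ?thesis .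
qed

lemma inv_upd_old:
  assumes iv: "inv t \<beta> L B V ve qe" and bB: "b \<in> B" and q: "q \<in> Dm (L b)"
  shows "inv t (\<beta>(x := b)) L B (insert x V) ve (qe(x := q))"
  using iv bB q unfolding inv_def by auto

lemma inv_upd_new:
  assumes iv: "inv t \<beta> L B V ve qe" and zB: "z \<notin> B" and bV: "\<beta> ` V \<subseteq> B"
    and rv: "RB t v" and tv: "t v = Some K" and vn: "v \<notin> ve ` B" and q: "q \<in> Dm K"
  shows "inv t (\<beta>(x := z)) (L(z := K)) (insert z B) (insert x V) (ve(z := v)) (qe(x := q))"
proof -
  have "\<forall>i\<in>V. \<beta> i \<noteq> z" using bV zB by auto
  moreover have "inj_on (ve(z := v)) (insert z B)"
    using iv vn zB unfolding inv_def by (auto simp: inj_on_def)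
  ultimately show ?thesis using iv zB rv tv q unfolding inv_def by auto
qed

lemma good_old:
  assumes IH: "good (\<beta>(x := b)) L B (insert x V) (sem \<psi> (\<beta>(x := b)))" and bB: "b \<in> B"
  shows "good \<beta> L B V (\<lambda>t ve qe. \<exists>q\<in>Dm (L b). sem \<psi> (\<beta>(x := b)) t ve (qe(x := q)))"
proof -
  obtain N col' \<theta>' where a: "\<forall>b qe. col' b qe < (N::nat)"
    "\<forall>bb qe qe'. (\<forall>i\<in>insert x V. (\<beta>(x := b)) i = bb \<longrightarrow> qe i = qe' i) \<longrightarrow> col' bb qe = col' bb qe'"
    "\<forall>c. fo_sig Sig n (\<theta>' c) \<and> fv (\<theta>' c) \<subseteq> B"
    "\<forall>t ve qe. wf_tree Sig ar n t \<longrightarrow> inv t (\<beta>(x := b)) L B (insert x V) ve qe \<longrightarrow>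
        (sem \<psi> (\<beta>(x := b)) t ve qe \<longleftrightarrow> holds t (\<theta>' (\<lambda>b. col' b qe)) ve)"
    using IH unfolding good_def by blast
  define S where "S = (\<lambda>qe. (\<lambda>q. col' b (qe(x := q))) ` Dm (L b))"
  define col where "col = (\<lambda>bb qe. if bb = b then set_encode (S qe) else col' bb qe)"
  have SN: "S qe \<subseteq> {..<N}" for qe using a(1) by (auto simp: S_def)
  have finS': "finite (S qe)" for qe using SN finite_subset by blast
  have oth: "col' bb (qe(x := q)) = col' bb qe" if "bb \<noteq> b" for bb qe q
    using a(2) that by auto
  show ?thesis
  proof (rule goodI[where col = col and N = "2 ^ N" and
        \<theta> = "\<lambda>c. fdisj (map (\<lambda>k. \<theta>' (c(b := k))) (filter (\<lambda>k. k \<in> set_decode (c b)) [0..<N]))"])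
    show "col bb qe < 2 ^ N" for bb qe
    proof (cases "bb = b")
      case True then show ?thesis using set_encode_lt[OF SN] by (simp add: col_def)
    next
      case False
      have "col' bb qe < N" using a(1) by blast
      also have "N < 2 ^ N" by (rule less_exp)
      finally show ?thesis using False by (simp add: col_def)
    qed
    show "col bb qe = col bb qe'" if H: "\<And>i. i \<in> V \<Longrightarrow> \<beta> i = bb \<Longrightarrow> qe i = qe' i" for bb qe qe'
    proof (cases "bb = b")
      case True
      have "col' b (qe(x := q)) = col' b (qe'(x := q))" for q
        using a(2) H True by (smt (verit, best) fun_upd_apply insert_iff)
      then have "S qe = S qe'" by (simp add: S_def)
      then show ?thesis using True by (simp add: col_def)
    next
      case False
      have "col' bb qe = col' bb qe'"
        using a(2) H False by (smt (verit, best) fun_upd_apply insert_iff)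
      then show ?thesis using False by (simp add: col_def)
    qed
    show "fo_sig Sig n (fdisj (map (\<lambda>k. \<theta>' (c(b := k))) (filter (\<lambda>k. k \<in> set_decode (c b)) [0..<N])))" for c
      using a(3) by auto
    show "fv (fdisj (map (\<lambda>k. \<theta>' (c(b := k))) (filter (\<lambda>k. k \<in> set_decode (c b)) [0..<N]))) \<subseteq> B" for c
      using a(3) by auto
    fix t ve qe assume wt: "wf_tree Sig ar n t" and iv: "inv t \<beta> L B V ve qe"
    have eqf: "(\<lambda>bb. col' bb (qe(x := q))) = (\<lambda>bb. col bb qe)(b := col' b (qe(x := q)))" for q
      by (rule ext) (simp add: col_def oth)
    have "(\<exists>q\<in>Dm (L b). sem \<psi> (\<beta>(x := b)) t ve (qe(x := q))) \<longleftrightarrow>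
          (\<exists>q\<in>Dm (L b). holds t (\<theta>' ((\<lambda>bb. col bb qe)(b := col' b (qe(x := q))))) ve)"
      using a(4) wt inv_upd_old[OF iv bB] eqf by auto
    also have "\<dots> \<longleftrightarrow> (\<exists>k\<in>S qe. holds t (\<theta>' ((\<lambda>bb. col bb qe)(b := k))) ve)"
      by (auto simp: S_def)
    also have "\<dots> \<longleftrightarrow> holds t (fdisj (map (\<lambda>k. \<theta>' ((\<lambda>bb. col bb qe)(b := k)))
          (filter (\<lambda>k. k \<in> set_decode ((\<lambda>bb. col bb qe) b)) [0..<N]))) ve"
      using SN[of qe] finS'[of qe] by (auto simp: col_def)
    finally show "(\<exists>q\<in>Dm (L b). sem \<psi> (\<beta>(x := b)) t ve (qe(x := q))) \<longleftrightarrow>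
          holds t (fdisj (map (\<lambda>k. \<theta>' ((\<lambda>bb. col bb qe)(b := k)))
          (filter (\<lambda>k. k \<in> set_decode ((\<lambda>bb. col bb qe) b)) [0..<N]))) ve" .
  qed
qed


lemma good_new:
  assumes IH: "good (\<beta>(x := z)) (L(z := K)) (insert z B) (insert x V) (sem \<psi> (\<beta>(x := z)))"
    and fB: "finite B" and zB: "z \<notin> B" and bV: "\<beta> ` V \<subseteq> B" and K: "K \<in> Kinds"
  shows "good \<beta> L B V (\<lambda>t ve qe. \<exists>v. RB t v \<and> t v = Some K \<and> v \<notin> ve ` B \<and>
            (\<exists>q\<in>Dm K. sem \<psi> (\<beta>(x := z)) t (ve(z := v)) (qe(x := q))))"
proof -
  obtain N col' \<theta>' where a: "\<forall>b qe. col' b qe < (N::nat)"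
    "\<forall>bb qe qe'. (\<forall>i\<in>insert x V. (\<beta>(x := z)) i = bb \<longrightarrow> qe i = qe' i) \<longrightarrow> col' bb qe = col' bb qe'"
    "\<forall>c. fo_sig Sig n (\<theta>' c) \<and> fv (\<theta>' c) \<subseteq> insert z B"
    "\<forall>t ve qe. wf_tree Sig ar n t \<longrightarrow> inv t (\<beta>(x := z)) (L(z := K)) (insert z B) (insert x V) ve qe \<longrightarrow>
        (sem \<psi> (\<beta>(x := z)) t ve qe \<longleftrightarrow> holds t (\<theta>' (\<lambda>b. col' b qe)) ve)"
    using IH unfolding good_def by blast
  have Vz: "\<forall>i\<in>V. \<beta> i \<noteq> z" using bV zB by blast
  define S where "S = (\<lambda>q. col' z ((\<lambda>_. []) (x := q))) ` Dm K"
  define col where "col = (\<lambda>bb qe. if bb = z then 0 else col' bb qe)"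
  define FR :: "'a fo" where "FR = fconj (map (\<lambda>b. FNeg (FEq z b)) (lst B))"
  define \<theta> where "\<theta> = (\<lambda>c. fdisj (map (\<lambda>k. FEx z (fconj [KF K z, RBF z, FR, \<theta>' (c(z := k))]))
      (filter (\<lambda>k. k \<in> S) [0..<N])))"
  have oth: "col' bb (qe(x := q)) = col' bb qe" if "bb \<noteq> z" for bb qe q
    by (rule a(2)[rule_format]) (use that in auto)
  have zz: "col' z (qe(x := q)) = col' z ((\<lambda>_. []) (x := q))" for qe q
    by (rule a(2)[rule_format]) (use Vz in auto)
  have SN: "k \<in> S \<Longrightarrow> k < N" for k unfolding S_def using a(1) by blast
  have fvFR: "fv FR \<subseteq> insert z B" unfolding FR_def using set_lst[OF fB] by auto
  show ?thesis
  proof (rule goodI[where col = col and N = N and \<theta> = \<theta>])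
    show "col bb qe < N" for bb qe
    proof -
      have "col' bb qe < N" "col' z qe < N" using a(1) by blast+
      then show ?thesis by (auto simp: col_def)
    qed
    show "col bb qe = col bb qe'" if H: "\<And>i. i \<in> V \<Longrightarrow> \<beta> i = bb \<Longrightarrow> qe i = qe' i" for bb qe qe'
    proof (cases "bb = z")
      case True then show ?thesis by (simp add: col_def)
    next
      case False
      have "col' bb qe = col' bb qe'"
        by (rule a(2)[rule_format]) (metis H False fun_upd_apply insert_iff)
      then show ?thesis using False by (simp add: col_def)
    qed
    show "fo_sig Sig n (\<theta> c)" for c
    proof -
      have "\<forall>k. fo_sig Sig n (\<theta>' (c(z := k)))" using a(3) by blast
      then show ?thesis by (simp add: \<theta>_def FR_def sig_KF[OF K] sig_RBF)
    qed
    show "fv (\<theta> c) \<subseteq> B" for c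
    proof -
      have "\<forall>k. fv (\<theta>' (c(z := k))) \<subseteq> insert z B" using a(3) by blast
      moreover have "fv (KF K z) \<subseteq> insert z B" "fv (RBF z) \<subseteq> insert z B"
        using fv_KF[of K z] fv_RBF[of z] by auto
      ultimately show ?thesis unfolding \<theta>_def using fvFR by (simp; blast)
    qed
    fix t ve qe assume wt: "wf_tree Sig ar n t" and iv: "inv t \<beta> L B V ve qe"
    have eqf: "(\<lambda>bb. col' bb (qe(x := q))) = (\<lambda>bb. col bb qe)(z := col' z ((\<lambda>_. []) (x := q)))" for q
      by (rule ext) (simp add: col_def oth zz[of qe q])
    have upd: "(ve(z := p)) b = ve b" if "b \<in> B" for p b using that zB by auto
    have hFR: "holds t FR (ve(z := p)) \<longleftrightarrow> p \<notin> ve ` B" for p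
      unfolding FR_def using set_lst[OF fB] upd by auto
    have "(\<exists>v. RB t v \<and> t v = Some K \<and> v \<notin> ve ` B \<and>
            (\<exists>q\<in>Dm K. sem \<psi> (\<beta>(x := z)) t (ve(z := v)) (qe(x := q)))) \<longleftrightarrow>
          (\<exists>v. RB t v \<and> t v = Some K \<and> v \<notin> ve ` B \<and>
            (\<exists>q\<in>Dm K. holds t (\<theta>' ((\<lambda>bb. col bb qe)(z := col' z ((\<lambda>_. []) (x := q))))) (ve(z := v))))"
    proof (intro iff_exI conj_cong refl bex_cong)
      fix v q assume "RB t v" "t v = Some K" "v \<notin> ve ` B" "q \<in> Dm K"
      then have "inv t (\<beta>(x := z)) (L(z := K)) (insert z B) (insert x V) (ve(z := v)) (qe(x := q))"
        using inv_upd_new[OF iv zB bV] by blast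
      then show "sem \<psi> (\<beta>(x := z)) t (ve(z := v)) (qe(x := q)) \<longleftrightarrow>
          holds t (\<theta>' ((\<lambda>bb. col bb qe)(z := col' z ((\<lambda>_. []) (x := q))))) (ve(z := v))"
        using a(4) wt eqf by metis
    qed
    also have "\<dots> \<longleftrightarrow> (\<exists>k\<in>S. \<exists>p. t p = Some K \<and> RB t p \<and> p \<notin> ve ` B \<and>
            holds t (\<theta>' ((\<lambda>bb. col bb qe)(z := k))) (ve(z := p)))"
      unfolding S_def by blast
    also have "\<dots> \<longleftrightarrow> holds t (\<theta> (\<lambda>bb. col bb qe)) ve"
    proof -
      have "holds t (\<theta> (\<lambda>bb. col bb qe)) ve \<longleftrightarrow> (\<exists>k\<in>S. \<exists>p. t p \<noteq> None \<and> holds t (KF K z) (ve(z := p)) \<and>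
            holds t (RBF z) (ve(z := p)) \<and> holds t FR (ve(z := p)) \<and>
            holds t (\<theta>' ((\<lambda>bb. col bb qe)(z := k))) (ve(z := p)))"
        unfolding \<theta>_def using SN by auto
      also have "\<dots> \<longleftrightarrow> (\<exists>k\<in>S. \<exists>p. t p = Some K \<and> RB t p \<and> p \<notin> ve ` B \<and>
            holds t (\<theta>' ((\<lambda>bb. col bb qe)(z := k))) (ve(z := p)))"
      proof (intro bex_cong refl iff_exI)
        fix k p
        show "(t p \<noteq> None \<and> holds t (KF K z) (ve(z := p)) \<and> holds t (RBF z) (ve(z := p)) \<and>
              holds t FR (ve(z := p)) \<and> holds t (\<theta>' ((\<lambda>bb. col bb qe)(z := k))) (ve(z := p))) \<longleftrightarrow>
            (t p = Some K \<and> RB t p \<and> p \<notin> ve ` B \<and> holds t (\<theta>' ((\<lambda>bb. col bb qe)(z := k))) (ve(z := p)))"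
          using holds_KF[of t K z "ve(z := p)"] holds_RBF[OF wt, of "ve(z := p)" z] hFR[of p] by auto
      qed
      finally show ?thesis by simp
    qed
    finally show "(\<exists>v. RB t v \<and> t v = Some K \<and> v \<notin> ve ` B \<and>
            (\<exists>q\<in>Dm K. sem \<psi> (\<beta>(x := z)) t (ve(z := v)) (qe(x := q)))) \<longleftrightarrow> holds t (\<theta> (\<lambda>bb. col bb qe)) ve" .
  qed
qed


lemma sem_FEx_split:
  assumes wt: "wf_tree Sig ar n t" and iv: "inv t \<beta> L B V ve qe" and fvV: "fv \<psi> - {x} \<subseteq> V"
    and bV: "\<beta> ` V \<subseteq> B" and zB: "z \<notin> B"
  shows "sem (FEx x \<psi>) \<beta> t ve qe \<longleftrightarrow>
    (\<exists>b\<in>B. \<exists>q\<in>Dm (L b). sem \<psi> (\<beta>(x := b)) t ve (qe(x := q))) \<or>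
    (\<exists>K\<in>Kinds. \<exists>v. RB t v \<and> t v = Some K \<and> v \<notin> ve ` B \<and>
            (\<exists>q\<in>Dm K. sem \<psi> (\<beta>(x := z)) t (ve(z := v)) (qe(x := q))))"
proof -
  define E where "E = (\<lambda>i. enc t (ve (\<beta> i)) (qe i))"
  have 1: "sem (FEx x \<psi>) \<beta> t ve qe \<longleftrightarrow> (\<exists>v q. valid t v q \<and> holds (flat (blockify t)) \<psi> (E(x := enc t v q)))"
    unfolding sem_def E_def using flat_dom[OF wt] by auto
  have old: "E(x := enc t (ve b) q) = (\<lambda>i. enc t (ve ((\<beta>(x := b)) i)) ((qe(x := q)) i))" for b q
    by (rule ext) (simp add: E_def)
  have new: "holds (flat (blockify t)) \<psi> (E(x := enc t v q)) = sem \<psi> (\<beta>(x := z)) t (ve(z := v)) (qe(x := q))" for v q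
    unfolding sem_def
  proof (rule holds_cong, intro ballI)
    fix i assume i: "i \<in> fv \<psi>"
    show "(E(x := enc t v q)) i = enc t ((ve(z := v)) ((\<beta>(x := z)) i)) ((qe(x := q)) i)"
    proof (cases "i = x")
      case False
      then have "\<beta> i \<in> B" using i fvV bV by auto
      then have "\<beta> i \<noteq> z" using zB by auto
      then show ?thesis using False by (simp add: E_def)
    qed simp
  qed
  show ?thesis
  proof
    assume "sem (FEx x \<psi>) \<beta> t ve qe"
    then obtain v q where vq: "valid t v q" and h: "holds (flat (blockify t)) \<psi> (E(x := enc t v q))"
      using 1 by blast
    obtain K' where K': "RB t v" "t v = Some K'" "q \<in> Dm K'" using vq by (auto simp: valid_def)
    show "(\<exists>b\<in>B. \<exists>q\<in>Dm (L b). sem \<psi> (\<beta>(x := b)) t ve (qe(x := q))) \<or>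
      (\<exists>K\<in>Kinds. \<exists>v. RB t v \<and> t v = Some K \<and> v \<notin> ve ` B \<and>
            (\<exists>q\<in>Dm K. sem \<psi> (\<beta>(x := z)) t (ve(z := v)) (qe(x := q))))"
    proof (cases "v \<in> ve ` B")
      case True
      then obtain b where b: "b \<in> B" "v = ve b" by blast
      then have "K' = L b" using iv K' unfolding inv_def by auto
      then have "\<exists>q\<in>Dm (L b). sem \<psi> (\<beta>(x := b)) t ve (qe(x := q))"
        using K' h old[of b q] b unfolding sem_def by auto
      then show ?thesis using b by blast
    next
      case False
      have "K' \<in> Kinds"
      proof (cases K')
        case (Inl a) then show ?thesis using t_Sig[OF wt] K' by (auto simp: Kinds_def)
      next
        case (Inr j) then show ?thesis using wf_Inr[OF wt] K' by (auto simp: Kinds_def)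
      qed
      then show ?thesis using K' False h new[of v q] by blast
    qed
  next
    assume "(\<exists>b\<in>B. \<exists>q\<in>Dm (L b). sem \<psi> (\<beta>(x := b)) t ve (qe(x := q))) \<or>
      (\<exists>K\<in>Kinds. \<exists>v. RB t v \<and> t v = Some K \<and> v \<notin> ve ` B \<and>
            (\<exists>q\<in>Dm K. sem \<psi> (\<beta>(x := z)) t (ve(z := v)) (qe(x := q))))"
    then show "sem (FEx x \<psi>) \<beta> t ve qe"
    proof
      assume "\<exists>b\<in>B. \<exists>q\<in>Dm (L b). sem \<psi> (\<beta>(x := b)) t ve (qe(x := q))"
      then obtain b q where b: "b \<in> B" "q \<in> Dm (L b)" "sem \<psi> (\<beta>(x := b)) t ve (qe(x := q))" by blast
      have v: "valid t (ve b) q" using iv b unfolding inv_def valid_def by auto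
      have "holds (flat (blockify t)) \<psi> (E(x := enc t (ve b) q))"
        using b(3) unfolding old[of b q] sem_def by simp
      then show ?thesis using 1 v by blast
    next
      assume "\<exists>K\<in>Kinds. \<exists>v. RB t v \<and> t v = Some K \<and> v \<notin> ve ` B \<and>
            (\<exists>q\<in>Dm K. sem \<psi> (\<beta>(x := z)) t (ve(z := v)) (qe(x := q)))"
      then obtain K v q where "RB t v" "t v = Some K" "q \<in> Dm K" "sem \<psi> (\<beta>(x := z)) t (ve(z := v)) (qe(x := q))"
        by blast
      then show ?thesis using 1 new[of v q] unfolding valid_def by blast
    qed
  qed
qed

lemma good_sem: "finite B \<Longrightarrow> fv \<psi> \<subseteq> V \<Longrightarrow> \<beta> ` V \<subseteq> B \<Longrightarrow> good \<beta> L B V (sem \<psi> \<beta>)"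
proof (induction \<psi> arbitrary: \<beta> L B V)
  case (FLe x y) then show ?case using good_FLe by simp
next
  case (FSucc k x y) then show ?case using good_FSucc by simp
next
  case (FLab c x) then show ?case using good_FLab by simp
next
  case (FVar j x) then show ?case using good_FVar by simp
next
  case (FRoot x) then show ?case using good_FRoot by simp
next
  case (FEq x y) then show ?case using good_FEq by simp
next
  case (FNeg \<psi>)
  have "good \<beta> L B V (\<lambda>t ve qe. \<not> sem \<psi> \<beta> t ve qe)" using FNeg good_neg by simp
  then show ?case by (rule good_cong) (simp add: sem_def)
next
  case (FConj \<psi>1 \<psi>2)
  have "good \<beta> L B V (\<lambda>t ve qe. sem \<psi>1 \<beta> t ve qe \<and> sem \<psi>2 \<beta> t ve qe)"
    using FConj good_conj by simp
  then show ?case by (rule good_cong) (simp add: sem_def)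
next
  case (FEx x \<psi>)
  define z where "z = fresh B"
  have zB: "z \<notin> B" using fresh_notin[OF FEx.prems(1)] z_def by simp
  have fvx: "fv \<psi> \<subseteq> insert x V" using FEx.prems(2) by auto
  have go: "good \<beta> L B V (\<lambda>t ve qe. \<exists>q\<in>Dm (L b). sem \<psi> (\<beta>(x := b)) t ve (qe(x := q)))" if "b \<in> B" for b
  proof (rule good_old[OF _ that])
    show "good (\<beta>(x := b)) L B (insert x V) (sem \<psi> (\<beta>(x := b)))"
      by (rule FEx.IH) (use FEx.prems that fvx in auto)
  qed
  have gn: "good \<beta> L B V (\<lambda>t ve qe. \<exists>v. RB t v \<and> t v = Some K \<and> v \<notin> ve ` B \<and>
            (\<exists>q\<in>Dm K. sem \<psi> (\<beta>(x := z)) t (ve(z := v)) (qe(x := q))))" if "K \<in> Kinds" for K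
  proof (rule good_new[OF _ FEx.prems(1) zB FEx.prems(3) that])
    show "good (\<beta>(x := z)) (L(z := K)) (insert z B) (insert x V) (sem \<psi> (\<beta>(x := z)))"
      by (rule FEx.IH) (use FEx.prems fvx in auto)
  qed
  have "good \<beta> L B V (\<lambda>t ve qe. (\<exists>b\<in>B. \<exists>q\<in>Dm (L b). sem \<psi> (\<beta>(x := b)) t ve (qe(x := q))) \<or>
    (\<exists>K\<in>Kinds. \<exists>v. RB t v \<and> t v = Some K \<and> v \<notin> ve ` B \<and>
            (\<exists>q\<in>Dm K. sem \<psi> (\<beta>(x := z)) t (ve(z := v)) (qe(x := q)))))"
    by (rule good_disj[OF good_Bex[OF FEx.prems(1) go] good_Bex[OF finite_Kinds gn]])
  then show ?case
  proof (rule good_cong)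
    fix t ve qe assume "wf_tree Sig ar n t" "inv t \<beta> L B V ve qe"
    then show "((\<exists>b\<in>B. \<exists>q\<in>Dm (L b). sem \<psi> (\<beta>(x := b)) t ve (qe(x := q))) \<or>
      (\<exists>K\<in>Kinds. \<exists>v. RB t v \<and> t v = Some K \<and> v \<notin> ve ` B \<and>
            (\<exists>q\<in>Dm K. sem \<psi> (\<beta>(x := z)) t (ve(z := v)) (qe(x := q))))) = sem (FEx x \<psi>) \<beta> t ve qe"
      using sem_FEx_split[OF _ _ _ FEx.prems(3) zB] FEx.prems(2) by simp
  qed
qed

end

definition sing :: "('a \<Rightarrow> nat) \<Rightarrow> 'a \<Rightarrow> 'a rtree" where
  "sing ar a p = (if p = [] then Some (Inl a) else
     (case p of [i] \<Rightarrow> if i < ar a then Some (Inr i) else None | _ \<Rightarrow> None))"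

lemma sing_wf: "a \<in> A \<Longrightarrow> wf_tree A ar (ar a) (sing ar a)"
  unfolding wf_tree_def sing_def
proof (intro conjI allI impI)
  fix p
  show "case (if p = [] then Some (Inl a) else case p of [] \<Rightarrow> None | [i] \<Rightarrow> if i < ar a then Some (Inr i) else None
          | i # aa # list \<Rightarrow> None) of
         None \<Rightarrow> \<forall>i. (if p @ [i] = [] then Some (Inl a) else case p @ [i] of [] \<Rightarrow> None
              | [ia] \<Rightarrow> if ia < ar a then Some (Inr ia) else None | ia # aa # list \<Rightarrow> None) = None
       | Some (Inl c) \<Rightarrow> c \<in> A \<and> (\<forall>i. ((if p @ [i] = [] then Some (Inl a) else case p @ [i] of [] \<Rightarrow> None
              | [ia] \<Rightarrow> if ia < ar a then Some (Inr ia) else None | ia # aa # list \<Rightarrow> None) \<noteq> None) = (i < ar c))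
       | Some (Inr j) \<Rightarrow> j < ar a \<and> (\<forall>i. (if p @ [i] = [] then Some (Inl a) else case p @ [i] of [] \<Rightarrow> None
              | [ia] \<Rightarrow> if ia < ar a then Some (Inr ia) else None | ia # aa # list \<Rightarrow> None) = None)"
    if "a \<in> A" using that by (cases p rule: list.exhaust; cases "tl p") (auto split: list.splits)
qed (auto split: list.splits if_splits)


context
  fixes A :: "'a set" and ar :: "'a \<Rightarrow> nat" and n :: nat
begin

interpretation S1: blk A ar n A ar "sing ar"
  by unfold_locales (rule sing_wf)

lemma hashole_sing: "hashole (sing ar a) c \<longleftrightarrow> c < ar a"
proof
  assume "hashole (sing ar a) c"
  then obtain q where H: "sing ar a q = Some (Inr c)" unfolding hashole_def by blast
  show "c < ar a"
  proof (cases q)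
    case Nil then show ?thesis using H by (simp add: sing_def)
  next
    case (Cons x xs)
    then show ?thesis using H by (cases xs) (auto simp: sing_def split: if_splits)
  qed
next
  assume "c < ar a"
  then have "sing ar a [c] = Some (Inr c)" by (simp add: sing_def)
  then show "hashole (sing ar a) c" unfolding hashole_def by blast
qed

lemma lp_sing: "S1.lp a q \<longleftrightarrow> q = []"
  unfolding S1.lp_def sing_def by (auto split: list.splits if_splits)

lemma lift_flat:
  assumes wt: "wf_tree A ar n t"
  shows "flat (S1.blockify t) = t"
proof (rule ext)
  fix p
  have RBall: "S1.RB t v" if "t v \<noteq> None" for v
    unfolding S1.RB_def
  proof (intro conjI allI impI)
    show "t v \<noteq> None" by (rule that)
    fix i assume i: "i < length v"
    have pre: "prefix (take i v @ [v ! i]) v"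
      using i by (metis take_Suc_conv_app_nth take_is_prefix)
    have "t (take i v @ [v ! i]) \<noteq> None" using wf_prefix'[OF wt that pre] .
    then obtain a where "t (take i v) = Some (Inl a)" "v ! i < ar a" using wf_child[OF wt] by blast
    then show "\<exists>a. t (take i v) = Some (Inl a) \<and> hashole (sing ar a) (v ! i)"
      using hashole_sing by blast
  qed
  have bpid: "t v \<noteq> None \<Longrightarrow> S1.bp t v = v" for v
  proof (induction v rule: rev_induct)
    case Nil then show ?case by simp
  next
    case (snoc c v)
    obtain a where ta: "t v = Some (Inl a)" and ca: "c < ar a" using wf_child[OF wt snoc.prems] by blast
    have aA: "a \<in> A" using wf_Inl[OF wt ta] by blast
    have "holepos (sing ar a) c = [c]"
      by (rule holepos_eq[OF sing_wf[OF aA]]) (use ca in \<open>simp add: sing_def\<close>)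
    then show ?case using snoc.IH ta by (simp add: S1.bp_snoc S1.hstep_def)
  qed
  show "flat (S1.blockify t) p = t p"
  proof (cases "t p")
    case None
    show ?thesis
    proof (rule ccontr)
      assume "flat (S1.blockify t) p \<noteq> t p"
      then have "flat (S1.blockify t) p \<noteq> None" using None by simp
      then obtain v q where vq: "S1.valid t v q" "p = S1.enc t v q" using S1.flat_dom[OF wt] by blast
      have q: "q = []" and tv: "t v \<noteq> None"
        by (rule S1.valid_cases[OF wt vq(1)]; use lp_sing S1.RB_dom in blast)+
      have "p = v" using vq(2) q bpid[OF tv] by (simp add: S1.enc_def)
      then show False using tv None by simp
    qed
  next
    case (Some K)
    have v: "S1.valid t p []" unfolding S1.valid_def S1.Dm_def using RBall Some lp_sing
      by (auto split: sum.splits)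
    have "flat (S1.blockify t) (S1.enc t p []) = S1.lab t p []" using S1.flat_enc[OF wt v] .
    moreover have "S1.enc t p [] = p" using bpid Some by (simp add: S1.enc_def)
    ultimately show ?thesis using Some by (auto simp: S1.lab_def sing_def split: sum.splits)
  qed
qed

lemma lift_wf:
  assumes wt: "wf_tree A ar n t"
  shows "wf_tree (talph A ar) fst n (S1.blockify t)"
  unfolding wf_tree_def
proof (intro conjI allI impI)
  obtain a where a: "a \<in> A" "t [] = Some (Inl a)" using wf_root[OF wt] by blast
  then show "\<exists>c\<in>talph A ar. S1.blockify t [] = Some (Inl c)"
    using sing_wf[OF a(1)] by (auto simp: S1.blockify_def talph_def)
next
  fix p
  show "case S1.blockify t p of None \<Rightarrow> \<forall>i. S1.blockify t (p @ [i]) = None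
    | Some (Inl c) \<Rightarrow> c \<in> talph A ar \<and> (\<forall>i. (S1.blockify t (p @ [i]) \<noteq> None) = (i < fst c))
    | Some (Inr j) \<Rightarrow> j < n \<and> (\<forall>i. S1.blockify t (p @ [i]) = None)"
  proof (cases "t p")
    case None then show ?thesis using wf_None[OF wt] by (simp add: S1.blockify_def)
  next
    case (Some K)
    show ?thesis
    proof (cases K)
      case (Inl a)
      have aA: "a \<in> A" using wf_Inl[OF wt] Some Inl by blast
      have "(S1.blockify t (p @ [i]) \<noteq> None) = (t (p @ [i]) \<noteq> None)" for i
        by (simp add: S1.blockify_def split: option.splits sum.splits)
      then have "(S1.blockify t (p @ [i]) \<noteq> None) = (i < ar a)" for i
        using wf_Inl[OF wt, of p a i] Some Inl by simp
      then show ?thesis using Some Inl sing_wf[OF aA] by (simp add: S1.blockify_def talph_def)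
    next
      case (Inr j)
      then show ?thesis using Some wf_Inr[OF wt, of p j] by (simp add: S1.blockify_def split: option.splits sum.splits)
    qed
  qed
next
  fix p q j
  assume "S1.blockify t p = Some (Inr j)" "S1.blockify t q = Some (Inr j)"
  then have "t p = Some (Inr j)" "t q = Some (Inr j)" by (auto simp: S1.blockify_def split: option.splits sum.splits)
  then show "p = q" using wf_uniq[OF wt] by blast
qed

end

theorem proposition10p6:
  fixes Sigma :: "'a set" and arS :: "'a \<Rightarrow> nat"
    and Gamma :: "'b set" and arG :: "'b \<Rightarrow> nat"
    and phi :: "nat \<Rightarrow> 'a rtree \<Rightarrow> 'b rtree"
    and n :: nat and K :: "'b rtree set"
  assumes "finite Sigma" and "finite Gamma"
    and "talg_morphism Sigma arS Gamma arG phi"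
    and "fo_definable Gamma arG n K"
  shows "fo_definable Sigma arS n {t \<in> trees Sigma arS n. phi n t \<in> K}"
proof -
  obtain f where f: "fv f = {}" "fo_sig Gamma n f" "K = {t \<in> trees Gamma arG n. models t f}"
    using assms(4) unfolding fo_definable_def by blast
  have m1: "\<And>k t. wf_tree Sigma arS k t \<Longrightarrow> wf_tree Gamma arG k (phi k t)"
    and m2: "\<And>k s. wf_tree (talph Sigma arS) fst k s \<Longrightarrow> phi k (flat s) = flat (tmap phi s)"
    using assms(3) unfolding talg_morphism_def by blast+
  define h where "h = (\<lambda>a. phi (arS a) (sing arS a))"
  have hwf: "a \<in> Sigma \<Longrightarrow> wf_tree Gamma arG (arS a) (h a)" for a
    unfolding h_def by (rule m1) (rule sing_wf)
  interpret S1: blk Sigma arS n Sigma arS "sing arS"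
    by unfold_locales (rule sing_wf)
  interpret T: tr Sigma arS n Gamma arG h
    by unfold_locales (use hwf assms(1) in auto)
  have phiT: "phi n t = flat (T.blockify t)" if wt: "wf_tree Sigma arS n t" for t
  proof -
    have "phi n t = phi n (flat (S1.blockify t))" using lift_flat[OF wt] by simp
    also have "\<dots> = flat (tmap phi (S1.blockify t))" using m2[OF lift_wf[OF wt]] .
    also have "tmap phi (S1.blockify t) = T.blockify t"
    proof (rule ext)
      fix p
      have hh: "phi (arS a) (sing arS a) = h a" for a by (simp add: h_def)
      show "tmap phi (S1.blockify t) p = T.blockify t p"
        by (auto simp: tmap_def S1.blockify_def T.blockify_def hh split: option.splits sum.splits)
    qed
    finally show ?thesis .
  qed
  define L :: "nat \<Rightarrow> 'a + nat" where "L = (\<lambda>_. Inr 0)"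
  have "T.good (\<lambda>_. 0) L {} {} (T.sem f (\<lambda>_. 0))"
    by (rule T.good_sem) (use f(1) in auto)
  then obtain N col \<theta> where a0: "\<forall>b qe. col b qe < (N::nat)"
    "\<forall>bb qe qe'. (\<forall>i\<in>{}. (\<lambda>_. 0::nat) i = bb \<longrightarrow> qe i = qe' i) \<longrightarrow> col bb qe = col bb qe'"
    and a: "\<forall>c. fo_sig Sigma n (\<theta> c) \<and> fv (\<theta> c) \<subseteq> {}"
    "\<forall>t ve qe. wf_tree Sigma arS n t \<longrightarrow> T.inv t (\<lambda>_. 0) L {} {} ve qe \<longrightarrow>
        (T.sem f (\<lambda>_. 0) t ve qe \<longleftrightarrow> holds t (\<theta> (\<lambda>b. col b qe)) ve)"
    unfolding T.good_def by blast
  define \<theta>0 where "\<theta>0 = \<theta> (\<lambda>b. col b (\<lambda>_. []))"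
  have fv0: "fv \<theta>0 = {}" using a(1) unfolding \<theta>0_def by blast
  have sig0: "fo_sig Sigma n \<theta>0" using a(1) unfolding \<theta>0_def by blast
  have key: "phi n t \<in> K \<longleftrightarrow> models t \<theta>0" if wt: "wf_tree Sigma arS n t" for t
  proof -
    have iv: "T.inv t (\<lambda>_. 0) L {} {} (\<lambda>_. []) (\<lambda>_. [])" by (simp add: T.inv_def)
    have "phi n t \<in> K \<longleftrightarrow> models (phi n t) f" using f(3) m1[OF wt] by (simp add: trees_def)
    also have "\<dots> \<longleftrightarrow> T.sem f (\<lambda>_. 0) t (\<lambda>_. []) (\<lambda>_. [])"
      unfolding models_def T.sem_def phiT[OF wt] by (rule holds_cong) (simp add: f(1))
    also have "\<dots> \<longleftrightarrow> models t \<theta>0"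
      using a(2) wt iv unfolding models_def \<theta>0_def by blast
    finally show ?thesis .
  qed
  show ?thesis
    unfolding fo_definable_def
    by (rule exI[of _ \<theta>0]) (use fv0 sig0 key in \<open>auto simp: trees_def\<close>)
qed

end
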